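(* Under the standing assumptions below, for every $\gamma\in\mathbb R^I_+$, $x_0\in\mathcal X$, $s_0\in\mathcal S$, the maximum value $V(\gamma,x_0,s_0)$ of the ex-ante lottery problem equals $D(\gamma,x_0,s_0)$.
   Context: Setup. Let $\mathcal S$ be a finite set and $(s_t)_{t\ge0}$ a Markov chain on $\mathcal S$ with transition probabilities $\pi(s'|s)>0$ for all $s,s'\in\mathcal S$; for $s^t=(s_0,\dots,s_t)\in\mathcal S^{t+1}$ write $\pi^t(s^t|s_0)$ for its probability given $s_0$ and $\mathbb E_{s^t}$ (or $\mathbb E_{s_t}$) for expectation over future shocks given $s^t$. Let $\mathcal A\subset\mathbb R^n$ be a finite set, $\mathcal X\subseteq\mathbb R^m$ a countable set, $\zeta:\mathcal X\times\mathcal A\times\mathcal S\to\mathcal X$, $p:\mathcal X\times\mathcal A\times\mathcal S\to\mathbb R$, $r,g^1,\dots,g^I$ bounded real functions on $\mathcal X\times\mathcal A\times\mathcal S$, $\bar g^i\in\mathbb R$, $\beta\in(0,1)$. A plan is $a=(a(s^t))_{t,s^t}$, $a(s^t)\in\mathcal A$, inducing $x(s^0)=x_0$, $x(s^{t+1})=\zeta(x(s^t),a(s^t),s_t)$. $\tilde{\mathcal A}(x,s)=\{a\in\mathcal A:p(x,a,s)\ge0\}$; $\tilde{\mathcal A}^\infty(x_0)$ is the set of plans with $a(s^t)\in\tilde{\mathcal A}(x(s^t),s_t)$ for all $t,s^t$. A plan is feasible for $(x_0,s_0)$ if it lies in $\tilde{\mathcal A}^\infty(x_0)$ and $\mathbb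 E_{s^t}\sum_{n\ge0}\beta^ng^i(x(s^{t+n}),a(s^{t+n}),s_{t+n})\ge\bar g^i$ for all $t,s^t,i$. Standing assumption: for every $(x_0,s_0)$ a feasible plan exists. Pre-action histories $h^t=(s_0,a_0,\dots,s_{t-1},a_{t-1},s_t)\in\mathcal H^t=\mathcal S^{t+1}\times\mathcal A^t$; a plan generates $h^t=(s_0,a(s^0),\dots,a(s^{t-1}),s_t)$ along $s^t$. Dual value: $\Lambda$ is the set of $(\lambda^i(h^t))_{t,h^t,i}$, $\lambda^i(h^t)\ge0$, $\sum_t\sum_{h^t}\sum_i\beta^t\lambda^i(h^t)\pi^t(s^t|s_0)<\infty$. $L(a,\lambda;\gamma,x_0,s_0)=\mathbb E_{s_0}\sum_t\beta^t\big[r(x(s^t),a(s^t),s_t)+\sum_i\gamma^ig^i(x(s^t),a(s^t),s_t)+\sum_i\lambda^i(h^t)(\sum_{n\ge0}\beta^ng^i(x(s^{t+n}),a(s^{t+n}),s_{t+n})-\bar g^i)\big]$ and $D(\gamma,x_0,s_0)=\inf_{\lambda\in\Lambda}\sup_{a\in\tilde{\mathcal A}^\infty(x_0)}L$. Ex-ante lottery problem. Give $\tilde{\mathcal A}^\infty(x_0)$ the product topology and let $\mathcal P(\tilde{\mathcal A}^\infty(x_0))$ be the set of Borel probability measures on it; a random plan $a\sim P$ is drawn independently of the shocks. For $\gamma\in\mathbb R^I$, the ex-ante lottery problem is to maximize $\mathbb E^{a\sim P}_{s_0}\sum_{t\ge0}\beta^t\big(r(x(s^t),a(s^t),s_t)+\sum_i\gamma^ig^i(x(s^t),a(s^t),s_t)\big)$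 over $P\in\mathcal P(\tilde{\mathcal A}^\infty(x_0))$ subject to: for all $t\ge0$, all $h^t=(s_0,\tilde a_0,\dots,s_{t-1},\tilde a_{t-1},s_t)\in\mathcal H^t$ and all $i$, $\mathbb E^{a\sim P}_{s^t}\Big[\mathbf 1\{(a(s^0),\dots,a(s^{t-1}))=(\tilde a_0,\dots,\tilde a_{t-1})\}\Big(\sum_{n\ge0}\beta^ng^i(x(s^{t+n}),a(s^{t+n}),s_{t+n})-\bar g^i\Big)\Big]\ge0$, where $s^t$ is the shock history contained in $h^t$ and the expectation is over $a\sim P$ and future shocks given $s^t$. (A maximizer exists.) *)

theory Defs
  imports "HOL-Analysis.Analysis" "HOL-Probability.Probability"
begin

text \<open>Shock histories s^t = (s_0,...,s_t) are represented as pairs (s_0, [s_1,...,s_t]);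
  t is the length of the list component.
  Transition probabilities: tp s s' = pi(s'|s).\<close>

type_synonym 's hist = "'s \<times> 's list"

definition hlen :: "'s hist \<Rightarrow> nat" where
  "hlen h = length (snd h)"

definition hlast :: "'s hist \<Rightarrow> 's" where
  "hlast h = last (fst h # snd h)"

definition hprefix :: "'s hist \<Rightarrow> nat \<Rightarrow> 's hist" where
  "hprefix h k = (fst h, take k (snd h))"

definition hext :: "'s hist \<Rightarrow> 's list \<Rightarrow> 's hist" where
  "hext h c = (fst h, snd h @ c)"

definition shock_hists :: "nat \<Rightarrow> 's hist set" where
  "shock_hists t = {h. hlen h = t}"

fun xst :: "(real^'m \<Rightarrow> real^'n \<Rightarrow> 's \<Rightarrow> real^'m) \<Rightarrow> real^'m \<Rightarrow> ('s hist \<Rightarrow> real^'n)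
             \<Rightarrow> 's hist \<Rightarrow> nat \<Rightarrow> real^'m" where
  "xst \<zeta> x0 a h 0 = x0"
| "xst \<zeta> x0 a h (Suc k) = \<zeta> (xst \<zeta> x0 a h k) (a (hprefix h k)) (hlast (hprefix h k))"

definition xpath :: "(real^'m \<Rightarrow> real^'n \<Rightarrow> 's \<Rightarrow> real^'m) \<Rightarrow> real^'m \<Rightarrow> ('s hist \<Rightarrow> real^'n)
                     \<Rightarrow> 's hist \<Rightarrow> real^'m" where
  "xpath \<zeta> x0 a h = xst \<zeta> x0 a h (hlen h)"

fun trans_prob :: "('s \<Rightarrow> 's \<Rightarrow> real) \<Rightarrow> 's \<Rightarrow> 's list \<Rightarrow> real" where
  "trans_prob tp s [] = 1"
| "trans_prob tp s (s' # c) = tp s s' * trans_prob tp s' c"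

definition pit :: "('s \<Rightarrow> 's \<Rightarrow> real) \<Rightarrow> 's \<Rightarrow> 's hist \<Rightarrow> real" where
  "pit tp s0 h = (if fst h = s0 then trans_prob tp s0 (snd h) else 0)"

text \<open>E_{s^t} sum_{n\<ge>0} beta^n f(x(s^{t+n}), a(s^{t+n}), s_{t+n}), written out as the series of
  conditional expectations (the shock space is finite, f is bounded)\<close>
definition fut :: "('s \<Rightarrow> 's \<Rightarrow> real) \<Rightarrow> real \<Rightarrow> (real^'m \<Rightarrow> real^'n \<Rightarrow> 's \<Rightarrow> real^'m) \<Rightarrow> real^'m
                   \<Rightarrow> ('s hist \<Rightarrow> real^'n) \<Rightarrow> (real^'m \<Rightarrow> real^'n \<Rightarrow> 's \<Rightarrow> real) \<Rightarrow> 's hist \<Rightarrow> real" where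
  "fut tp \<beta> \<zeta> x0 a f h =
     (\<Sum>n. \<beta> ^ n * (\<Sum>c\<in>{c :: 's list. length c = n}.
        trans_prob tp (hlast h) c *
        f (xpath \<zeta> x0 a (hext h c)) (a (hext h c)) (hlast (hext h c))))"

definition plan_acts :: "('s hist \<Rightarrow> real^'n) \<Rightarrow> 's hist \<Rightarrow> (real^'n) list" where
  "plan_acts a h = map (\<lambda>k. a (hprefix h k)) [0..<hlen h]"

definition Ainf :: "(real^'n) set \<Rightarrow> (real^'m \<Rightarrow> real^'n \<Rightarrow> 's \<Rightarrow> real) \<Rightarrow>
                    (real^'m \<Rightarrow> real^'n \<Rightarrow> 's \<Rightarrow> real^'m) \<Rightarrow> real^'m \<Rightarrow> ('s hist \<Rightarrow> real^'n) set" where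
  "Ainf A p \<zeta> x0 = {a. \<forall>h. a h \<in> A \<and> p (xpath \<zeta> x0 a h) (a h) (hlast h) \<ge> 0}"

definition feasible_plan where
  "feasible_plan tp \<beta> A p \<zeta> I g gbar x0 s0 a \<longleftrightarrow>
     a \<in> Ainf A p \<zeta> x0 \<and> (\<forall>h. fst h = s0 \<longrightarrow> (\<forall>i<I. fut tp \<beta> \<zeta> x0 a (g i) h \<ge> gbar i))"

text \<open>pre-action histories h^t = (s^t, (a_0,...,a_{t-1})) in H^t = S^{t+1} x A^t\<close>
definition preH :: "(real^'n) set \<Rightarrow> nat \<Rightarrow> ('s hist \<times> (real^'n) list) set" where
  "preH A t = {(h, as). hlen h = t \<and> length as = t \<and> set as \<subseteq> A}"

definition Lambda where
  "Lambda tp \<beta> A I s0 =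
     {lam :: nat \<Rightarrow> ('s hist \<times> (real^'n) list) \<Rightarrow> real.
        (\<forall>i hh. 0 \<le> lam i hh) \<and>
        summable (\<lambda>t. \<Sum>hh\<in>preH A t. \<Sum>i<I. \<beta> ^ t * lam i hh * pit tp s0 (fst hh))}"

definition Lag where
  "Lag tp \<beta> \<zeta> r I g gbar \<gamma> x0 s0 a lam =
     (\<Sum>t. \<beta> ^ t * (\<Sum>h\<in>shock_hists t. pit tp s0 h *
        (r (xpath \<zeta> x0 a h) (a h) (hlast h)
         + (\<Sum>i<I. \<gamma> i * g i (xpath \<zeta> x0 a h) (a h) (hlast h))
         + (\<Sum>i<I. lam i (h, plan_acts a h) * (fut tp \<beta> \<zeta> x0 a (g i) h - gbar i)))))"

definition Dval where
  "Dval tp \<beta> A p \<zeta> r I g gbar \<gamma> x0 s0 =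
     (INF lam\<in>Lambda tp \<beta> A I s0. SUP a\<in>Ainf A p \<zeta> x0.
        ereal (Lag tp \<beta> \<zeta> r I g gbar \<gamma> x0 s0 a lam))"

definition Jval where
  "Jval tp \<beta> \<zeta> r I g \<gamma> x0 s0 a =
     (\<Sum>t. \<beta> ^ t * (\<Sum>h\<in>shock_hists t. pit tp s0 h *
        (r (xpath \<zeta> x0 a h) (a h) (hlast h)
         + (\<Sum>i<I. \<gamma> i * g i (xpath \<zeta> x0 a h) (a h) (hlast h)))))"

text \<open>Borel probability measures on tilde A^infinity(x0) (product topology, subspace Borel sets)
  satisfying the ex-ante lottery constraints; the random plan is independent of the shocks,
  so expectations over (a, shocks) are integrals over P of the shock expectations.\<close>
definition lottery_feasible where
  "lottery_feasible tp \<beta> A p \<zeta> I g gbar x0 s0 (P :: ('s hist \<Rightarrow> real^'n) measure) \<longleftrightarrow>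
     prob_space P \<and> sets P = sets (restrict_space borel (Ainf A p \<zeta> x0)) \<and>
     (\<forall>t. \<forall>(h, as)\<in>preH A t. fst h = s0 \<longrightarrow> (\<forall>i<I.
        (\<integral>a. (if plan_acts a h = as then 1 else 0) *
               (fut tp \<beta> \<zeta> x0 a (g i) h - gbar i) \<partial>P) \<ge> 0))"

definition Vval where
  "Vval tp \<beta> A p \<zeta> r I g gbar \<gamma> x0 s0 =
     (SUP P\<in>{P. lottery_feasible tp \<beta> A p \<zeta> I g gbar x0 s0 P}.
        ereal (\<integral>a. Jval tp \<beta> \<zeta> r I g \<gamma> x0 s0 a \<partial>P))"

end

theory Submission
  imports Defs "HOL-Library.Diagonal_Subsequence"
begin

lemma finite_shock_hists: "finite (shock_hists t :: ('s::finite) hist set)"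
proof -
  have "shock_hists t = (UNIV :: 's set) \<times> {xs. set xs \<subseteq> UNIV \<and> length xs = t}"
    by (auto simp: shock_hists_def hlen_def)
  thus ?thesis using finite_lists_length_eq[of "UNIV::'s set" t] by simp
qed

definition Dlev :: "nat \<Rightarrow> ('s hist) set" where "Dlev T = {h. hlen h \<le> T}"

lemma finite_Dlev: "finite (Dlev T :: ('s::finite) hist set)"
proof -
  have "Dlev T = (UNIV :: 's set) \<times> {xs. set xs \<subseteq> UNIV \<and> length xs \<le> T}"
    by (auto simp: Dlev_def hlen_def)
  thus ?thesis using finite_lists_length_le[of "UNIV::'s set" T] by simp
qed

lemma hlen_hprefix: "k \<le> hlen h \<Longrightarrow> hlen (hprefix h k) = k"
  by (simp add: hlen_def hprefix_def)

lemma hlen_hext[simp]: "hlen (hext h c) = hlen h + length c"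
  by (simp add: hlen_def hext_def)

lemma hprefix_hext: "k \<le> hlen h \<Longrightarrow> hprefix (hext h c) k = hprefix h k"
  by (simp add: hprefix_def hext_def hlen_def)

lemma xst_local:
  assumes "\<And>j. j < k \<Longrightarrow> a (hprefix h j) = b (hprefix h j)"
  shows "xst \<zeta> x0 a h k = xst \<zeta> x0 b h k"
  using assms by (induction k) auto

lemma xpath_local:
  assumes "\<And>h'. hlen h' < hlen h \<Longrightarrow> a h' = b h'"
  shows "xpath \<zeta> x0 a h = xpath \<zeta> x0 b h"
  unfolding xpath_def
  apply (rule xst_local) apply (rule assms) by (metis hlen_hprefix less_imp_le)

lemma plan_acts_local:
  assumes "\<And>h'. hlen h' < hlen h \<Longrightarrow> a h' = b h'"
  shows "plan_acts a h = plan_acts b h"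
  unfolding plan_acts_def using assms
  by (auto simp: hlen_hprefix)

lemma trans_prob_nonneg: "(\<And>s s'. tp s s' > 0) \<Longrightarrow> trans_prob tp s c \<ge> 0"
  by (induction c arbitrary: s) (simp_all, metis mult_nonneg_nonneg less_imp_le)

lemma trans_prob_pos: "(\<And>s s'. tp s s' > 0) \<Longrightarrow> trans_prob tp s c > 0"
  by (induction c arbitrary: s) auto

lemma lists_Suc: "{c :: 'a list. length c = Suc n} = (\<lambda>(x, c). x # c) ` (UNIV \<times> {c. length c = n})"
  by (auto simp: length_Suc_conv)

lemma finite_lists_len: "finite {c :: ('a::finite) list. length c = n}"
  using finite_lists_length_eq[of "UNIV::'a set" n] by simp

lemma trans_prob_sum:
  fixes tp :: "'s::finite \<Rightarrow> 's \<Rightarrow> real"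
  assumes "\<And>s. (\<Sum>s'\<in>UNIV. tp s s') = 1"
  shows "(\<Sum>c\<in>{c. length c = n}. trans_prob tp s c) = 1"
proof (induction n arbitrary: s)
  case 0
  have "{c::'s list. length c = 0} = {[]}" by auto
  thus ?case by simp
next
  case (Suc n)
  have inj: "inj_on (\<lambda>(x, c). x # c) (UNIV \<times> {c::'s list. length c = n})"
    by (auto simp: inj_on_def)
  have "(\<Sum>c\<in>{c. length c = Suc n}. trans_prob tp s c)
      = (\<Sum>(x,c)\<in>UNIV \<times> {c. length c = n}. trans_prob tp s (x # c))"
    unfolding lists_Suc by (subst sum.reindex[OF inj]) (simp add: case_prod_unfold)
  also have "\<dots> = (\<Sum>x\<in>UNIV. tp s x * (\<Sum>c\<in>{c. length c = n}. trans_prob tp x c))"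
    by (subst sum.cartesian_product[symmetric]) (simp add: sum_distrib_left)
  also have "\<dots> = 1" using Suc assms by simp
  finally show ?case .
qed

lemma geom_bound:
  fixes u :: "nat \<Rightarrow> real"
  assumes b: "0 \<le> \<beta>" "\<beta> < 1" and u: "\<And>t. \<bar>u t\<bar> \<le> C * \<beta> ^ t"
  shows "summable u" "\<bar>suminf u\<bar> \<le> C / (1 - \<beta>)"
    "\<bar>suminf u - (\<Sum>t<T. u t)\<bar> \<le> C * \<beta> ^ T / (1 - \<beta>)"
proof -
  have sg: "summable (\<lambda>t. C * \<beta> ^ t)" using b by (intro summable_mult summable_geometric) auto
  show su: "summable u" by (rule summable_comparison_test'[OF sg, of 0]) (use u in auto)
  have sa: "summable (\<lambda>t. \<bar>u t\<bar>)" by (rule summable_comparison_test'[OF sg, of 0]) (use u in auto)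
  have "\<bar>suminf u\<bar> \<le> (\<Sum>t. \<bar>u t\<bar>)" using summable_rabs[OF sa] by simp
  also have "\<dots> \<le> (\<Sum>t. C * \<beta> ^ t)" by (rule suminf_le[OF u sa sg])
  also have "\<dots> = C / (1 - \<beta>)" using b by (simp add: suminf_mult suminf_geometric)
  finally show "\<bar>suminf u\<bar> \<le> C / (1 - \<beta>)" .
  have sg2: "summable (\<lambda>t. C * \<beta> ^ T * \<beta> ^ t)" using b by (intro summable_mult summable_geometric) auto
  have sT: "summable (\<lambda>t. u (t + T))" using su by (simp add: summable_iff_shift)
  have saT: "summable (\<lambda>t. \<bar>u (t + T)\<bar>)" using sa summable_iff_shift[of "\<lambda>t. \<bar>u t\<bar>" T] by simp
  have "suminf u - (\<Sum>t<T. u t) = (\<Sum>t. u (t + T))"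
    using suminf_split_initial_segment[OF su, of T] by simp
  hence "\<bar>suminf u - (\<Sum>t<T. u t)\<bar> = \<bar>\<Sum>t. u (t + T)\<bar>" by simp
  also have "\<dots> \<le> (\<Sum>t. \<bar>u (t + T)\<bar>)" using summable_rabs[OF saT] by simp
  also have "\<dots> \<le> (\<Sum>t. C * \<beta> ^ T * \<beta> ^ t)"
    by (rule suminf_le[OF _ saT sg2]) (metis u power_add mult.commute mult.left_commute)
  also have "\<dots> = C * \<beta> ^ T / (1 - \<beta>)" using b by (simp add: suminf_mult suminf_geometric)
  finally show "\<bar>suminf u - (\<Sum>t<T. u t)\<bar> \<le> C * \<beta> ^ T / (1 - \<beta>)" .
qed

locale dual =
  fixes tp :: "'s::finite \<Rightarrow> 's \<Rightarrow> real"
    and A :: "(real^'n) set" and X :: "(real^'m) set"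
    and \<zeta> :: "real^'m \<Rightarrow> real^'n \<Rightarrow> 's \<Rightarrow> real^'m"
    and p r :: "real^'m \<Rightarrow> real^'n \<Rightarrow> 's \<Rightarrow> real"
    and I :: nat and g :: "nat \<Rightarrow> real^'m \<Rightarrow> real^'n \<Rightarrow> 's \<Rightarrow> real"
    and gbar :: "nat \<Rightarrow> real" and \<beta> :: real
    and \<gamma> :: "nat \<Rightarrow> real" and x0 :: "real^'m" and s0 :: 's
    and Br Bg :: real
  assumes trans_pos: "\<And>s s'. tp s s' > 0"
    and trans_sum: "\<And>s. (\<Sum>s'\<in>UNIV. tp s s') = 1"
    and A_fin: "finite A"
    and \<zeta>_X: "\<And>x a s. x \<in> X \<Longrightarrow> a \<in> A \<Longrightarrow> \<zeta> x a s \<in> X"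
    and r_bnd: "\<And>x a s. x \<in> X \<Longrightarrow> a \<in> A \<Longrightarrow> \<bar>r x a s\<bar> \<le> Br"
    and g_bnd: "\<And>i x a s. i < I \<Longrightarrow> x \<in> X \<Longrightarrow> a \<in> A \<Longrightarrow> \<bar>g i x a s\<bar> \<le> Bg"
    and Br_nn: "0 \<le> Br" and Bg_nn: "0 \<le> Bg"
    and \<beta>: "0 < \<beta>" "\<beta> < 1"
    and standing: "\<And>x s. x \<in> X \<Longrightarrow> \<exists>a. feasible_plan tp \<beta> A p \<zeta> I g gbar x s a"
    and \<gamma>_nonneg: "\<And>i. i < I \<Longrightarrow> \<gamma> i \<ge> 0"
    and x0: "x0 \<in> X"
begin

abbreviation "AI \<equiv> Ainf A p \<zeta> x0"
abbreviation "xp a h \<equiv> xpath \<zeta> x0 a h"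

lemma AI_A: "a \<in> AI \<Longrightarrow> a h \<in> A"
  unfolding Ainf_def by blast

lemma AI_p: "a \<in> AI \<Longrightarrow> p (xp a h) (a h) (hlast h) \<ge> 0"
  unfolding Ainf_def by blast

lemma xst_X: "a \<in> AI \<Longrightarrow> xst \<zeta> x0 a h k \<in> X"
  by (induction k) (auto simp: x0 \<zeta>_X AI_A)

lemma AI_X: "a \<in> AI \<Longrightarrow> xp a h \<in> X"
  by (simp add: xpath_def xst_X)

lemma tp_nonneg: "trans_prob tp s c \<ge> 0"
  using trans_prob_nonneg[OF trans_pos] .

lemma tp_sum: "(\<Sum>c\<in>{c. length c = n}. trans_prob tp s c) = 1"
  using trans_prob_sum[OF trans_sum] .

lemma pit_nonneg: "pit tp s0 h \<ge> 0"
  by (simp add: pit_def tp_nonneg)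

lemma pit_pos: "fst h = s0 \<Longrightarrow> pit tp s0 h > 0"
  by (simp add: pit_def trans_prob_pos[OF trans_pos])

lemma pit_sum: "(\<Sum>h\<in>shock_hists t. pit tp s0 h) = 1"
proof -
  have e: "shock_hists t = (UNIV :: 's set) \<times> {c. length c = t}"
    by (auto simp: shock_hists_def hlen_def)
  have "(\<Sum>h\<in>shock_hists t. pit tp s0 h) = (\<Sum>s\<in>UNIV. \<Sum>c\<in>{c. length c = t}. pit tp s0 (s, c))"
    unfolding e by (subst sum.cartesian_product) (simp add: case_prod_unfold)
  also have "\<dots> = (\<Sum>s\<in>UNIV. if s = s0 then (\<Sum>c\<in>{c. length c = t}. trans_prob tp s0 c) else 0)"
    by (rule sum.cong) (auto simp: pit_def)
  also have "\<dots> = 1" by (simp add: tp_sum)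
  finally show ?thesis .
qed

definition fin :: "(real^'m \<Rightarrow> real^'n \<Rightarrow> 's \<Rightarrow> real) \<Rightarrow> ('s hist \<Rightarrow> real^'n) \<Rightarrow> 's hist \<Rightarrow> nat \<Rightarrow> real" where
  "fin f a h n = (\<Sum>c\<in>{c :: 's list. length c = n}.
        trans_prob tp (hlast h) c * f (xp a (hext h c)) (a (hext h c)) (hlast (hext h c)))"

lemma fut_eq: "fut tp \<beta> \<zeta> x0 a f h = (\<Sum>n. \<beta> ^ n * fin f a h n)"
  by (simp add: fut_def fin_def)

lemma fin_bnd:
  assumes "a \<in> AI" "\<And>x b s. x \<in> X \<Longrightarrow> b \<in> A \<Longrightarrow> \<bar>f x b s\<bar> \<le> B"
  shows "\<bar>fin f a h n\<bar> \<le> B"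
proof -
  have "\<bar>fin f a h n\<bar> \<le> (\<Sum>c\<in>{c :: 's list. length c = n}. \<bar>trans_prob tp (hlast h) c * f (xp a (hext h c)) (a (hext h c)) (hlast (hext h c))\<bar>)"
    unfolding fin_def by (rule sum_abs)
  also have "\<dots> \<le> (\<Sum>c\<in>{c :: 's list. length c = n}. trans_prob tp (hlast h) c * B)"
    by (rule sum_mono) (auto simp: abs_mult tp_nonneg intro!: mult_left_mono assms AI_X AI_A)
  also have "\<dots> = B" by (simp add: sum_distrib_right[symmetric] tp_sum)
  finally show ?thesis .
qed

lemma fut_bnds:
  assumes "a \<in> AI" "\<And>x b s. x \<in> X \<Longrightarrow> b \<in> A \<Longrightarrow> \<bar>f x b s\<bar> \<le> B"
  shows "summable (\<lambda>n. \<beta> ^ n * fin f a h n)"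
    "\<bar>fut tp \<beta> \<zeta> x0 a f h\<bar> \<le> B / (1 - \<beta>)"
    "\<bar>fut tp \<beta> \<zeta> x0 a f h - (\<Sum>n<N. \<beta> ^ n * fin f a h n)\<bar> \<le> B * \<beta> ^ N / (1 - \<beta>)"
proof -
  have u: "\<bar>\<beta> ^ n * fin f a h n\<bar> \<le> B * \<beta> ^ n" for n
    using fin_bnd[OF assms, where h=h and n=n] \<beta> by (simp add: abs_mult mult.commute mult_left_mono)
  note gb = geom_bound[of \<beta> "\<lambda>n. \<beta> ^ n * fin f a h n", OF _ _ u]
  show "summable (\<lambda>n. \<beta> ^ n * fin f a h n)" using gb \<beta> by simp
  show "\<bar>fut tp \<beta> \<zeta> x0 a f h\<bar> \<le> B / (1 - \<beta>)" using gb \<beta> by (simp add: fut_eq)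
  show "\<bar>fut tp \<beta> \<zeta> x0 a f h - (\<Sum>n<N. \<beta> ^ n * fin f a h n)\<bar> \<le> B * \<beta> ^ N / (1 - \<beta>)"
    using gb \<beta> by (simp add: fut_eq)
qed

end

context dual begin

definition Jin :: "nat \<Rightarrow> ('s hist \<Rightarrow> real^'n) \<Rightarrow> real" where
  "Jin t a = (\<Sum>h\<in>shock_hists t. pit tp s0 h *
        (r (xp a h) (a h) (hlast h) + (\<Sum>i<I. \<gamma> i * g i (xp a h) (a h) (hlast h))))"

definition "Jf a = Jval tp \<beta> \<zeta> r I g \<gamma> x0 s0 a"

lemma Jf_eq: "Jf a = (\<Sum>t. \<beta> ^ t * Jin t a)"
  by (simp add: Jf_def Jval_def Jin_def)

definition "Bj = Br + (\<Sum>i<I. \<gamma> i) * Bg"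

lemma Bj_nn: "0 \<le> Bj"
proof -
  have "0 \<le> sum \<gamma> {..<I}" by (rule sum_nonneg) (simp add: \<gamma>_nonneg)
  thus ?thesis unfolding Bj_def using Br_nn Bg_nn by simp
qed

lemma Jin_bnd: assumes "a \<in> AI" shows "\<bar>Jin t a\<bar> \<le> Bj"
proof -
  have inner: "\<bar>r (xp a h) (a h) (hlast h) + (\<Sum>i<I. \<gamma> i * g i (xp a h) (a h) (hlast h))\<bar> \<le> Bj" for h
  proof -
    have "\<bar>\<Sum>i<I. \<gamma> i * g i (xp a h) (a h) (hlast h)\<bar> \<le> (\<Sum>i<I. \<bar>\<gamma> i * g i (xp a h) (a h) (hlast h)\<bar>)"
      by (rule sum_abs)
    also have "\<dots> \<le> (\<Sum>i<I. \<gamma> i * Bg)"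
      by (rule sum_mono) (auto simp: abs_mult \<gamma>_nonneg intro!: mult_left_mono g_bnd AI_X AI_A assms)
    finally have "\<bar>\<Sum>i<I. \<gamma> i * g i (xp a h) (a h) (hlast h)\<bar> \<le> (\<Sum>i<I. \<gamma> i) * Bg"
      by (simp add: sum_distrib_right)
    moreover have "\<bar>r (xp a h) (a h) (hlast h)\<bar> \<le> Br" by (intro r_bnd AI_X AI_A assms)
    ultimately show ?thesis unfolding Bj_def by linarith
  qed
  have "\<bar>Jin t a\<bar> \<le> (\<Sum>h\<in>shock_hists t. \<bar>pit tp s0 h *
        (r (xp a h) (a h) (hlast h) + (\<Sum>i<I. \<gamma> i * g i (xp a h) (a h) (hlast h)))\<bar>)"
    unfolding Jin_def by (rule sum_abs)
  also have "\<dots> \<le> (\<Sum>h\<in>shock_hists t. pit tp s0 h * Bj)"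
    by (rule sum_mono) (auto simp: abs_mult pit_nonneg intro!: mult_left_mono inner)
  also have "\<dots> = Bj" by (simp add: sum_distrib_right[symmetric] pit_sum)
  finally show ?thesis .
qed

lemma Jf_bnds:
  assumes "a \<in> AI"
  shows "summable (\<lambda>t. \<beta> ^ t * Jin t a)" "\<bar>Jf a\<bar> \<le> Bj / (1 - \<beta>)"
    "\<bar>Jf a - (\<Sum>t<T. \<beta> ^ t * Jin t a)\<bar> \<le> Bj * \<beta> ^ T / (1 - \<beta>)"
proof -
  have u: "\<bar>\<beta> ^ t * Jin t a\<bar> \<le> Bj * \<beta> ^ t" for t
    using Jin_bnd[OF assms, of t] \<beta> by (simp add: abs_mult mult.commute mult_left_mono)
  note gb = geom_bound[of \<beta> "\<lambda>t. \<beta> ^ t * Jin t a", OF _ _ u]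
  show "summable (\<lambda>t. \<beta> ^ t * Jin t a)" using gb \<beta> by simp
  show "\<bar>Jf a\<bar> \<le> Bj / (1 - \<beta>)" using gb \<beta> by (simp add: Jf_eq)
  show "\<bar>Jf a - (\<Sum>t<T. \<beta> ^ t * Jin t a)\<bar> \<le> Bj * \<beta> ^ T / (1 - \<beta>)"
    using gb \<beta> by (simp add: Jf_eq)
qed

definition cyl :: "nat \<Rightarrow> (('s hist \<Rightarrow> real^'n) \<Rightarrow> real) \<Rightarrow> bool" where
  "cyl T G \<longleftrightarrow> (\<forall>a\<in>AI. \<forall>b\<in>AI. (\<forall>h\<in>Dlev T. a h = b h) \<longrightarrow> G a = G b)"

definition approx :: "(('s hist \<Rightarrow> real^'n) \<Rightarrow> real) \<Rightarrow> bool" where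
  "approx F \<longleftrightarrow> (\<forall>e>0. \<exists>T G. cyl T G \<and> (\<forall>a\<in>AI. \<bar>F a - G a\<bar> \<le> e))"

lemma small_tail:
  assumes "0 \<le> B" "e > 0" shows "\<exists>T. B * \<beta> ^ T / (1 - \<beta>) \<le> e"
proof -
  have "0 < e * (1 - \<beta>) / (B + 1)" using assms \<beta> by simp
  then obtain T where T: "\<beta> ^ T < e * (1 - \<beta>) / (B + 1)" using real_arch_pow_inv \<beta> by blast
  have "B * \<beta> ^ T \<le> (B + 1) * \<beta> ^ T" using \<beta> by simp
  also have "\<dots> \<le> (B + 1) * (e * (1 - \<beta>) / (B + 1))" using T assms by (intro mult_left_mono) auto
  also have "\<dots> = e * (1 - \<beta>)" using assms by simp
  finally show ?thesis using \<beta> by (auto simp: divide_le_eq intro!: exI[of _ T])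
qed

lemma agree_xp:
  assumes "\<forall>h'\<in>Dlev T. a h' = b h'" "hlen h \<le> T"
  shows "xp a h = xp b h" "a h = b h" "plan_acts a h = plan_acts b h"
proof -
  have *: "a h' = b h'" if "hlen h' < hlen h" for h'
  proof -
    have "h' \<in> Dlev T" using that assms(2) by (simp add: Dlev_def)
    thus ?thesis using assms(1) by blast
  qed
  show "xp a h = xp b h" by (rule xpath_local) (rule *)
  show "a h = b h" using assms unfolding Dlev_def by blast
  show "plan_acts a h = plan_acts b h" by (rule plan_acts_local) (rule *)
qed

lemma cyl_Jtrunc: "cyl T (\<lambda>a. \<Sum>t<T. \<beta> ^ t * Jin t a)"
  unfolding cyl_def
proof (intro ballI impI)
  fix a b :: "'s hist \<Rightarrow> real^'n" assume ag: "\<forall>h\<in>Dlev T. a h = b h"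
  have "Jin t a = Jin t b" if "t < T" for t
    unfolding Jin_def
    by (rule sum.cong[OF refl]) (use that agree_xp[OF ag] in \<open>auto simp: shock_hists_def\<close>)
  thus "(\<Sum>t<T. \<beta> ^ t * Jin t a) = (\<Sum>t<T. \<beta> ^ t * Jin t b)" by simp
qed

lemma approx_J: "approx Jf"
  unfolding approx_def
proof (intro allI impI)
  fix e :: real assume "e > 0"
  then obtain T where T: "Bj * \<beta> ^ T / (1 - \<beta>) \<le> e" using small_tail Bj_nn by blast
  show "\<exists>T G. cyl T G \<and> (\<forall>a\<in>AI. \<bar>Jf a - G a\<bar> \<le> e)"
    using cyl_Jtrunc[of T] Jf_bnds(3) T by (meson order.trans)
qed

definition phi :: "nat \<Rightarrow> 's hist \<Rightarrow> (real^'n) list \<Rightarrow> ('s hist \<Rightarrow> real^'n) \<Rightarrow> real" where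
  "phi i h as a = (if plan_acts a h = as then 1 else 0) * (fut tp \<beta> \<zeta> x0 a (g i) h - gbar i)"

lemma phi_bnd: assumes "a \<in> AI" "i < I" shows "\<bar>phi i h as a\<bar> \<le> Bg / (1 - \<beta>) + \<bar>gbar i\<bar>"
proof -
  have "\<bar>fut tp \<beta> \<zeta> x0 a (g i) h\<bar> \<le> Bg / (1 - \<beta>)"
    using fut_bnds(2)[OF assms(1), of "g i" Bg] g_bnd assms by blast
  thus ?thesis unfolding phi_def by auto
qed

lemma fin_local:
  assumes "\<forall>h'\<in>Dlev T. a h' = b h'" "hlen h + n \<le> T"
  shows "fin f a h n = fin f b h n"
  unfolding fin_def
  by (rule sum.cong[OF refl]) (use agree_xp[OF assms(1)] assms(2) in auto)

lemma approx_phi: assumes "i < I" shows "approx (phi i h as)"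
  unfolding approx_def
proof (intro allI impI)
  fix e :: real assume "e > 0"
  then obtain N where N: "Bg * \<beta> ^ N / (1 - \<beta>) \<le> e" using small_tail Bg_nn by blast
  define G where "G a = (if plan_acts a h = as then 1 else 0) * ((\<Sum>n<N. \<beta> ^ n * fin (g i) a h n) - gbar i)" for a
  have "cyl (hlen h + N) G"
    unfolding cyl_def
  proof (intro ballI impI)
    fix a b :: "'s hist \<Rightarrow> real^'n" assume ag: "\<forall>h'\<in>Dlev (hlen h + N). a h' = b h'"
    have "fin (g i) a h n = fin (g i) b h n" if "n < N" for n
      by (rule fin_local[OF ag]) (use that in auto)
    moreover have "plan_acts a h = plan_acts b h" by (rule agree_xp(3)[OF ag]) simp
    ultimately show "G a = G b" unfolding G_def by simp
  qed
  moreover have "\<bar>phi i h as a - G a\<bar> \<le> e" if "a \<in> AI" for a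
  proof -
    have "\<bar>fut tp \<beta> \<zeta> x0 a (g i) h - (\<Sum>n<N. \<beta> ^ n * fin (g i) a h n)\<bar> \<le> Bg * \<beta> ^ N / (1 - \<beta>)"
      using fut_bnds(3)[OF that, of "g i" Bg] g_bnd assms by blast
    thus ?thesis using N unfolding phi_def G_def by auto
  qed
  ultimately show "\<exists>T G. cyl T G \<and> (\<forall>a\<in>AI. \<bar>phi i h as a - G a\<bar> \<le> e)" by blast
qed

end

lemma exp_le_quad: fixes x :: real assumes "\<bar>x\<bar> \<le> 1" shows "exp x \<le> 1 + x + x\<^sup>2"
proof (cases "x \<ge> 0")
  case True thus ?thesis using exp_bound[of x] assms by simp
next
  case False
  have pos: "0 < 1 - x" using False by simp
  have "1 - x \<le> exp (- x)" using exp_ge_add_one_self[of "-x"] by simp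
  hence "exp x * (1 - x) \<le> exp x * exp (-x)" by (intro mult_left_mono) auto
  hence "exp x * (1 - x) \<le> 1" by (simp add: exp_minus_inverse)
  hence "exp x \<le> 1 / (1 - x)" using pos by (simp add: le_divide_eq)
  also have "1 / (1 - x) \<le> 1 + x + x\<^sup>2"
  proof -
    have e1: "(1 + x + x\<^sup>2) * (1 - x) = 1 - x * x\<^sup>2"
      by (simp add: algebra_simps power2_eq_square)
    have "x * x\<^sup>2 \<le> 0" using False by (intro mult_nonpos_nonneg) auto
    hence "1 \<le> (1 + x + x\<^sup>2) * (1 - x)" using e1 by linarith
    thus ?thesis using pos by (simp add: divide_le_eq)
  qed
  finally show ?thesis .
qed

lemma hedge:
  fixes \<psi> :: "'k \<Rightarrow> 'p \<Rightarrow> real"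
  assumes K: "finite K" "K \<noteq> {}"
    and bnd: "\<And>k a. k \<in> K \<Longrightarrow> a \<in> S \<Longrightarrow> \<bar>\<psi> k a\<bar> \<le> B"
    and resp: "\<And>\<mu>. (\<forall>k\<in>K. 0 \<le> \<mu> k) \<Longrightarrow> sum \<mu> K = 1 \<Longrightarrow> \<exists>a\<in>S. 0 \<le> (\<Sum>k\<in>K. \<mu> k * \<psi> k a)"
    and e: "e > 0"
  shows "\<exists>L. L \<noteq> [] \<and> set L \<subseteq> S \<and> (\<forall>k\<in>K. - e \<le> (\<Sum>a\<leftarrow>L. \<psi> k a) / length L)"
proof -
  define B1 where "B1 = \<bar>B\<bar> + 1"
  have B1: "B1 > 0" "B1 \<ge> 1" unfolding B1_def by auto
  have bnd1: "\<bar>\<psi> k a\<bar> \<le> B1" if "k \<in> K" "a \<in> S" for k a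
    using bnd[OF that] unfolding B1_def by simp
  define \<eta> where "\<eta> = min (1 / B1) (e / (2 * B1\<^sup>2))"
  have \<eta>pos: "\<eta> > 0" unfolding \<eta>_def using B1 e by simp
  have \<eta>B: "\<eta> * B1 \<le> 1"
  proof -
    have "\<eta> \<le> 1 / B1" unfolding \<eta>_def by simp
    hence "\<eta> * B1 \<le> 1 / B1 * B1" using B1 by (intro mult_right_mono) auto
    thus ?thesis using B1 by simp
  qed
  have \<eta>B2: "\<eta> * B1\<^sup>2 \<le> e / 2"
  proof -
    have "\<eta> \<le> e / (2 * B1\<^sup>2)" unfolding \<eta>_def by simp
    hence "\<eta> * B1\<^sup>2 \<le> e / (2 * B1\<^sup>2) * B1\<^sup>2" using B1 by (intro mult_right_mono) auto
    thus ?thesis using B1 by simp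
  qed
  define Sk where "Sk L k = (\<Sum>a\<leftarrow>L. \<psi> k a)" for L k
  define W where "W L = (\<Sum>k\<in>K. exp (- \<eta> * Sk L k))" for L
  have Wpos: "W L > 0" for L unfolding W_def using K by (intro sum_pos) auto
  have ex: "\<exists>a\<in>S. 0 \<le> (\<Sum>k\<in>K. exp (- \<eta> * Sk L k) * \<psi> k a)" for L
  proof -
    define \<mu> where "\<mu> k = exp (- \<eta> * Sk L k) / W L" for k
    have "\<forall>k\<in>K. 0 \<le> \<mu> k" unfolding \<mu>_def using Wpos[of L] by simp
    moreover have "sum \<mu> K = 1" unfolding \<mu>_def W_def using Wpos[of L]
      by (simp add: sum_divide_distrib[symmetric] W_def)
    ultimately obtain a where a: "a \<in> S" "0 \<le> (\<Sum>k\<in>K. \<mu> k * \<psi> k a)" using resp by blast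
    have "(\<Sum>k\<in>K. \<mu> k * \<psi> k a) = (\<Sum>k\<in>K. exp (- \<eta> * Sk L k) * \<psi> k a) / W L"
      unfolding \<mu>_def by (simp add: sum_divide_distrib)
    hence "0 \<le> (\<Sum>k\<in>K. exp (- \<eta> * Sk L k) * \<psi> k a)" using a(2) Wpos[of L]
      by (simp add: zero_le_divide_iff)
    thus ?thesis using a(1) by blast
  qed
  define ch where "ch L = (SOME a. a \<in> S \<and> 0 \<le> (\<Sum>k\<in>K. exp (- \<eta> * Sk L k) * \<psi> k a))" for L
  have ch: "ch L \<in> S" "0 \<le> (\<Sum>k\<in>K. exp (- \<eta> * Sk L k) * \<psi> k (ch L))" for L
    using someI_ex[OF ex[of L, unfolded Bex_def]] unfolding ch_def by auto
  define sq where "sq = rec_nat [] (\<lambda>n L. L @ [ch L])"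
  have sq0: "sq 0 = []" and sqS: "sq (Suc n) = sq n @ [ch (sq n)]" for n
    unfolding sq_def by simp_all
  have len: "length (sq n) = n" for n by (induction n) (simp_all add: sq0 sqS)
  have setS: "set (sq n) \<subseteq> S" for n by (induction n) (auto simp: sq0 sqS ch)
  define q where "q = \<eta>\<^sup>2 * B1\<^sup>2"
  have step: "W (sq (Suc n)) \<le> W (sq n) * (1 + q)" for n
  proof -
    let ?L = "sq n" and ?a = "ch (sq n)"
    have "W (sq (Suc n)) = (\<Sum>k\<in>K. exp (- \<eta> * Sk ?L k) * exp (- \<eta> * \<psi> k ?a))"
      unfolding W_def Sk_def sqS by (simp add: algebra_simps exp_add[symmetric])
    also have "\<dots> \<le> (\<Sum>k\<in>K. exp (- \<eta> * Sk ?L k) * (1 + (- \<eta> * \<psi> k ?a) + q))"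
    proof (rule sum_mono)
      fix k assume k: "k \<in> K"
      have ab: "\<bar>\<psi> k ?a\<bar> \<le> B1" using bnd1[OF k ch(1)] .
      have x1: "\<bar>- \<eta> * \<psi> k ?a\<bar> \<le> 1"
      proof -
        have "\<bar>- \<eta> * \<psi> k ?a\<bar> = \<eta> * \<bar>\<psi> k ?a\<bar>" using \<eta>pos by (simp add: abs_mult)
        also have "\<dots> \<le> \<eta> * B1" using ab \<eta>pos by (intro mult_left_mono) auto
        finally show ?thesis using \<eta>B by linarith
      qed
      have sq_le: "(- \<eta> * \<psi> k ?a)\<^sup>2 \<le> q"
      proof -
        have "(- \<eta> * \<psi> k ?a)\<^sup>2 = \<eta>\<^sup>2 * \<bar>\<psi> k ?a\<bar>\<^sup>2" by (simp add: power_mult_distrib)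
        also have "\<dots> \<le> \<eta>\<^sup>2 * B1\<^sup>2" using ab by (intro mult_left_mono power_mono) auto
        finally show ?thesis unfolding q_def .
      qed
      have "exp (- \<eta> * \<psi> k ?a) \<le> 1 + (- \<eta> * \<psi> k ?a) + q"
        using exp_le_quad[OF x1] sq_le by linarith
      thus "exp (- \<eta> * Sk ?L k) * exp (- \<eta> * \<psi> k ?a) \<le> exp (- \<eta> * Sk ?L k) * (1 + (- \<eta> * \<psi> k ?a) + q)"
        by (intro mult_left_mono) auto
    qed
    also have "\<dots> = W ?L * (1 + q) - \<eta> * (\<Sum>k\<in>K. exp (- \<eta> * Sk ?L k) * \<psi> k ?a)"
      unfolding W_def by (simp add: algebra_simps sum.distrib sum_distrib_left sum_distrib_right sum_subtractf)
    also have "\<dots> \<le> W ?L * (1 + q)" using ch(2)[of ?L] \<eta>pos by simp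
    finally show ?thesis .
  qed
  have qnn: "q \<ge> 0" unfolding q_def by simp
  have Wn: "W (sq n) \<le> card K * (1 + q) ^ n" for n
  proof (induction n)
    case 0 thus ?case by (simp add: W_def Sk_def sq0)
  next
    case (Suc n)
    have "W (sq (Suc n)) \<le> W (sq n) * (1 + q)" by (rule step)
    also have "\<dots> \<le> card K * (1 + q) ^ n * (1 + q)" using Suc qnn by (intro mult_right_mono) auto
    finally show ?case by (simp add: mult_ac)
  qed
  define c where "c = ln (real (card K))"
  have cnn: "c \<ge> 0" unfolding c_def using K by (simp add: card_gt_0_iff Suc_leI)
  obtain n :: nat where n: "n > 2 * c / (\<eta> * e)"
    using reals_Archimedean2 by blast
  have "2 * c / (\<eta> * e) \<ge> 0" using cnn \<eta>pos e by simp
  hence npos: "n > 0" using n by linarith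
  have bound: "- e \<le> Sk (sq n) k / n" if k: "k \<in> K" for k
  proof -
    have "exp (- \<eta> * Sk (sq n) k) \<le> W (sq n)"
      unfolding W_def by (rule member_le_sum) (use k K in auto)
    also have "\<dots> \<le> card K * (1 + q) ^ n" by (rule Wn)
    also have "\<dots> \<le> card K * exp q ^ n"
      using qnn exp_ge_add_one_self[of q] by (intro mult_left_mono power_mono) auto
    also have "\<dots> = exp (c + n * q)"
      unfolding c_def using K by (simp add: exp_add exp_of_nat_mult card_gt_0_iff)
    finally have "- \<eta> * Sk (sq n) k \<le> c + n * q" by simp
    hence "- Sk (sq n) k \<le> (c + n * q) / \<eta>" using \<eta>pos by (simp add: le_divide_eq mult.commute)
    hence "- Sk (sq n) k / n \<le> (c + n * q) / \<eta> / n" using npos using divide_right_mono[of "- Sk (sq n) k" "(c + n * q) / \<eta>" "real n"] by simp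
    also have "\<dots> = c / (\<eta> * n) + q / \<eta>" using npos \<eta>pos by (simp add: field_simps)
    also have "q / \<eta> = \<eta> * B1\<^sup>2" unfolding q_def using \<eta>pos by (simp add: power2_eq_square)
    also have "c / (\<eta> * n) \<le> e / 2"
    proof -
      have "2 * c < n * (\<eta> * e)" using n \<eta>pos e by (simp add: divide_less_eq mult.commute)
      thus ?thesis using npos \<eta>pos e by (simp add: divide_le_eq field_simps)
    qed
    finally have "- Sk (sq n) k / n \<le> e / 2 + \<eta> * B1\<^sup>2" by simp
    thus ?thesis using \<eta>B2 by simp
  qed
  show ?thesis
    by (rule exI[of _ "sq n"]) (use len[of n] npos setS[of n] bound in \<open>auto simp: Sk_def\<close>)
qed

context dual begin

abbreviation "M0 \<equiv> Pi\<^sub>M UNIV (\<lambda>_::'s hist. (borel :: (real^'n) measure))"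
abbreviation "MA \<equiv> restrict_space M0 AI"

lemma space_MA: "space MA = AI"
  by (simp add: space_restrict_space space_PiM)

lemma sets_MA: "sets MA = sets (restrict_space borel AI)"
  by (rule sets_restrict_space_cong) (rule sets_PiM_equal_borel)

definition RT :: "nat \<Rightarrow> ('s hist \<Rightarrow> real^'n) set" where
  "RT T = (\<lambda>a. restrict a (Dlev T)) ` AI"

definition Cy :: "nat \<Rightarrow> ('s hist \<Rightarrow> real^'n) \<Rightarrow> ('s hist \<Rightarrow> real^'n) set" where
  "Cy T v = {a. \<forall>h\<in>Dlev T. a h = v h}"

definition pk :: "nat \<Rightarrow> ('s hist \<Rightarrow> real^'n) \<Rightarrow> ('s hist \<Rightarrow> real^'n)" where
  "pk T v = (SOME a. a \<in> AI \<and> restrict a (Dlev T) = v)"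

lemma RT_sub: "RT T \<subseteq> PiE (Dlev T) (\<lambda>_. A)"
  unfolding RT_def by (auto simp: AI_A)

lemma finite_RT: "finite (RT T)"
  by (rule finite_subset[OF RT_sub]) (intro finite_PiE finite_Dlev A_fin)

lemma pk: assumes "v \<in> RT T" shows "pk T v \<in> AI" "restrict (pk T v) (Dlev T) = v"
proof -
  have "\<exists>a. a \<in> AI \<and> restrict a (Dlev T) = v" using assms unfolding RT_def by blast
  from someI_ex[OF this] show "pk T v \<in> AI" "restrict (pk T v) (Dlev T) = v"
    unfolding pk_def by auto
qed

lemma Cy_iff: "a \<in> Cy T v \<longleftrightarrow> (\<forall>h\<in>Dlev T. a h = v h)"
  by (simp add: Cy_def)

lemma in_Cy_restrict: "v \<in> RT T \<Longrightarrow> a \<in> Cy T v \<longleftrightarrow> restrict a (Dlev T) = v"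
  using RT_sub[of T] unfolding Cy_def by (auto simp: restrict_def PiE_def extensional_def fun_eq_iff)

lemma cyl_decomp:
  assumes G: "cyl T G" and a: "a \<in> AI"
  shows "G a = (\<Sum>v\<in>RT T. G (pk T v) * indicator (Cy T v) a)"
proof -
  define v0 where "v0 = restrict a (Dlev T)"
  have v0: "v0 \<in> RT T" unfolding v0_def RT_def using a by blast
  have "(\<Sum>v\<in>RT T. G (pk T v) * indicator (Cy T v) a) = (\<Sum>v\<in>{v0}. G (pk T v) * indicator (Cy T v) a)"
  proof (rule sum.mono_neutral_right)
    show "finite (RT T)" by (rule finite_RT)
    show "{v0} \<subseteq> RT T" using v0 by simp
    show "\<forall>v\<in>RT T - {v0}. G (pk T v) * indicator (Cy T v) a = 0"
      using in_Cy_restrict unfolding v0_def by (auto simp: indicator_def)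
  qed
  also have "\<dots> = G (pk T v0)"
    using in_Cy_restrict[OF v0, of a] v0_def by simp
  also have "\<dots> = G a"
  proof -
    have "\<forall>h\<in>Dlev T. pk T v0 h = a h"
      using pk(2)[OF v0] unfolding v0_def by (metis restrict_apply')
    thus ?thesis using G pk(1)[OF v0] a unfolding cyl_def by blast
  qed
  finally show ?thesis by simp
qed

lemma Cy_meas: "Cy T v \<in> sets M0"
proof -
  have "Cy T v = {a \<in> space M0. \<forall>h\<in>Dlev T. a h = v h}" by (auto simp: Cy_def space_PiM)
  also have "\<dots> \<in> sets M0" using finite_Dlev[of T] by measurable
  finally show ?thesis .
qed

lemma cyl_meas: assumes "cyl T G" shows "G \<in> borel_measurable MA"
proof -
  have "(\<lambda>a. \<Sum>v\<in>RT T. G (pk T v) * indicator (Cy T v) a) \<in> borel_measurable MA"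
    by (intro borel_measurable_sum borel_measurable_times borel_measurable_const
        measurable_restrict_space1 borel_measurable_indicator Cy_meas)
  thus ?thesis
    by (rule measurable_cong[THEN iffD1, rotated]) (use cyl_decomp[OF assms] space_MA in auto)
qed

lemma approx_meas: assumes "approx F" shows "F \<in> borel_measurable MA"
proof -
  have "\<forall>n::nat. \<exists>T G. cyl T G \<and> (\<forall>a\<in>AI. \<bar>F a - G a\<bar> \<le> 1 / Suc n)"
    using assms unfolding approx_def by simp
  then obtain T G where TG: "\<And>n. cyl (T n) (G n)" "\<And>n a. a \<in> AI \<Longrightarrow> \<bar>F a - G n a\<bar> \<le> 1 / Suc n"
    by metis
  show ?thesis
  proof (rule borel_measurable_LIMSEQ_real)
    fix a assume "a \<in> space MA"
    hence a: "a \<in> AI" by (simp add: space_MA)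
    show "(\<lambda>n. G n a) \<longlonglongrightarrow> F a"
    proof (rule LIMSEQ_I)
      fix e :: real assume "e > 0"
      then obtain N :: nat where N: "1 / Suc N < e" using nat_approx_posE by blast
      have "norm (G n a - F a) < e" if "n \<ge> N" for n
      proof -
        have "1 / real (Suc n) \<le> 1 / Suc N" using that by (simp add: frac_le)
        thus ?thesis using TG(2)[OF a, of n] N by (simp add: abs_minus_commute)
      qed
      thus "\<exists>N. \<forall>n\<ge>N. norm (G n a - F a) < e" by blast
    qed
  next
    fix n show "G n \<in> borel_measurable MA" by (rule cyl_meas[OF TG(1)])
  qed
qed

end

context dual begin

definition ALs :: "nat \<Rightarrow> (real^'n) list set" where
  "ALs t = {as. length as = t \<and> set as \<subseteq> A}"

lemma finite_ALs: "finite (ALs t)"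
  unfolding ALs_def using finite_lists_length_eq[OF A_fin, of t] by (simp add: conj_commute)

lemma preH_eq: "preH A t = shock_hists t \<times> ALs t"
  by (auto simp: preH_def shock_hists_def ALs_def)

lemma pa_ALs: assumes "a \<in> AI" shows "plan_acts a h \<in> ALs (hlen h)"
  unfolding ALs_def plan_acts_def by (auto intro: AI_A[OF assms])

definition Lin :: "(nat \<Rightarrow> ('s hist \<times> (real^'n) list) \<Rightarrow> real) \<Rightarrow> nat \<Rightarrow> ('s hist \<Rightarrow> real^'n) \<Rightarrow> real" where
  "Lin lam t a = (\<Sum>h\<in>shock_hists t. pit tp s0 h *
      (\<Sum>i<I. lam i (h, plan_acts a h) * (fut tp \<beta> \<zeta> x0 a (g i) h - gbar i)))"

lemma Lag_eq: "Lag tp \<beta> \<zeta> r I g gbar \<gamma> x0 s0 a lam = (\<Sum>t. \<beta> ^ t * Jin t a + \<beta> ^ t * Lin lam t a)"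
  unfolding Lag_def Jin_def Lin_def
  by (simp add: algebra_simps sum.distrib sum_distrib_left)

lemma Lin_expand:
  assumes a: "a \<in> AI"
  shows "Lin lam t a = (\<Sum>h\<in>shock_hists t. \<Sum>as\<in>ALs t. \<Sum>i<I. pit tp s0 h * lam i (h, as) * phi i h as a)"
  unfolding Lin_def
proof (rule sum.cong[OF refl])
  fix h :: "'s hist" assume h: "h \<in> shock_hists t"
  have pa: "plan_acts a h \<in> ALs t" using pa_ALs[OF a, of h] h by (simp add: shock_hists_def)
  have "(\<Sum>as\<in>ALs t. \<Sum>i<I. pit tp s0 h * lam i (h, as) * phi i h as a)
      = (\<Sum>i<I. \<Sum>as\<in>ALs t. if plan_acts a h = as then pit tp s0 h * lam i (h, as) * (fut tp \<beta> \<zeta> x0 a (g i) h - gbar i) else 0)"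
    by (subst sum.swap) (auto simp: phi_def intro!: sum.cong)
  also have "\<dots> = (\<Sum>i<I. pit tp s0 h * lam i (h, plan_acts a h) * (fut tp \<beta> \<zeta> x0 a (g i) h - gbar i))"
    by (rule sum.cong[OF refl]) (simp add: sum.delta finite_ALs pa)
  finally show "pit tp s0 h * (\<Sum>i<I. lam i (h, plan_acts a h) * (fut tp \<beta> \<zeta> x0 a (g i) h - gbar i))
      = (\<Sum>as\<in>ALs t. \<Sum>i<I. pit tp s0 h * lam i (h, as) * phi i h as a)"
    by (simp add: sum_distrib_left mult.assoc)
qed

definition "Bphi = Bg / (1 - \<beta>) + (\<Sum>i<I. \<bar>gbar i\<bar>)"

lemma phi_bnd': assumes "a \<in> AI" "i < I" shows "\<bar>phi i h as a\<bar> \<le> Bphi"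
proof -
  have "\<bar>gbar i\<bar> \<le> (\<Sum>i<I. \<bar>gbar i\<bar>)" by (rule member_le_sum) (use assms in auto)
  thus ?thesis using phi_bnd[OF assms, of h as] unfolding Bphi_def by linarith
qed

lemma sum_prod_split: "(\<Sum>hh\<in>S \<times> B. f hh) = (\<Sum>h\<in>S. \<Sum>b\<in>B. f (h, b))"
  by (simp add: sum.cartesian_product)

definition lsum :: "(nat \<Rightarrow> ('s hist \<times> (real^'n) list) \<Rightarrow> real) \<Rightarrow> nat \<Rightarrow> real" where
  "lsum lam t = (\<Sum>hh\<in>preH A t. \<Sum>i<I. \<beta> ^ t * lam i hh * pit tp s0 (fst hh))"

lemma Lin_bnd:
  assumes a: "a \<in> AI" and nn: "\<And>i hh. 0 \<le> lam i hh"
  shows "\<bar>\<beta> ^ t * Lin lam t a\<bar> \<le> Bphi * lsum lam t"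
proof -
  have "\<bar>\<beta> ^ t * Lin lam t a\<bar> = \<bar>\<Sum>h\<in>shock_hists t. \<Sum>as\<in>ALs t. \<Sum>i<I. \<beta> ^ t * (pit tp s0 h * lam i (h, as) * phi i h as a)\<bar>"
    using \<beta> by (simp add: Lin_expand[OF a] sum_distrib_left)
  also have "\<dots> \<le> (\<Sum>h\<in>shock_hists t. \<Sum>as\<in>ALs t. \<Sum>i<I. \<bar>\<beta> ^ t * (pit tp s0 h * lam i (h, as) * phi i h as a)\<bar>)"
    by (rule order.trans[OF sum_abs sum_mono], rule order.trans[OF sum_abs sum_mono], rule sum_abs)
  also have "\<dots> \<le> (\<Sum>h\<in>shock_hists t. \<Sum>as\<in>ALs t. \<Sum>i<I. Bphi * (\<beta> ^ t * lam i (h, as) * pit tp s0 h))"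
  proof (intro sum_mono)
    fix h as i assume i: "i \<in> {..<I}"
    have "\<bar>\<beta> ^ t * (pit tp s0 h * lam i (h, as) * phi i h as a)\<bar> = (\<beta> ^ t * lam i (h, as) * pit tp s0 h) * \<bar>phi i h as a\<bar>"
      using \<beta> nn pit_nonneg by (simp add: abs_mult)
    also have "\<dots> \<le> (\<beta> ^ t * lam i (h, as) * pit tp s0 h) * Bphi"
      using phi_bnd'[OF a, of i h as] i \<beta> nn pit_nonneg by (intro mult_left_mono) auto
    finally show "\<bar>\<beta> ^ t * (pit tp s0 h * lam i (h, as) * phi i h as a)\<bar> \<le> Bphi * (\<beta> ^ t * lam i (h, as) * pit tp s0 h)"
      by (simp add: mult.commute)
  qed
  also have "\<dots> = Bphi * lsum lam t"
    unfolding lsum_def preH_eq sum_prod_split by (simp add: sum_distrib_left)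
  finally show ?thesis .
qed

lemma Bphi_nn: "0 \<le> Bphi"
  unfolding Bphi_def using Bg_nn \<beta> by (simp add: sum_nonneg)

lemma Lambda_D: assumes "lam \<in> Lambda tp \<beta> A I s0"
  shows "\<And>i hh. 0 \<le> lam i hh" "summable (lsum lam)"
  using assms unfolding Lambda_def lsum_def by auto

lemma Lin_summable:
  assumes a: "a \<in> AI" and lam: "lam \<in> Lambda tp \<beta> A I s0"
  shows "summable (\<lambda>t. \<beta> ^ t * Lin lam t a)"
proof (rule summable_comparison_test'[of "\<lambda>t. Bphi * lsum lam t" 0])
  show "summable (\<lambda>t. Bphi * lsum lam t)" using Lambda_D(2)[OF lam] by (rule summable_mult)
  show "norm (\<beta> ^ t * Lin lam t a) \<le> Bphi * lsum lam t" for t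
    using Lin_bnd[OF a Lambda_D(1)[OF lam]] by simp
qed

lemma Lag_split:
  assumes a: "a \<in> AI" and lam: "lam \<in> Lambda tp \<beta> A I s0"
  shows "Lag tp \<beta> \<zeta> r I g gbar \<gamma> x0 s0 a lam = Jf a + (\<Sum>t. \<beta> ^ t * Lin lam t a)"
  unfolding Lag_eq Jf_eq
  by (rule suminf_add[symmetric, OF Jf_bnds(1)[OF a] Lin_summable[OF a lam]])

end

context dual begin

lemma lf_basic:
  assumes "lottery_feasible tp \<beta> A p \<zeta> I g gbar x0 s0 P"
  shows "prob_space P" "sets P = sets MA" "space P = AI"
    "\<And>N. measurable P N = measurable MA N"
proof -
  show "prob_space P" using assms by (simp add: lottery_feasible_def)
  show s: "sets P = sets MA" using assms by (simp add: lottery_feasible_def sets_MA)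
  show "space P = AI" using sets_eq_imp_space_eq[OF s] space_MA by simp
  show "\<And>N. measurable P N = measurable MA N" by (rule measurable_cong_sets[OF s refl])
qed

lemma approx_integrable:
  assumes P: "prob_space P" "sets P = sets MA" "space P = AI"
    and F: "approx F" "\<And>a. a \<in> AI \<Longrightarrow> \<bar>F a\<bar> \<le> B"
  shows "integrable P F"
proof -
  interpret prob_space P by (rule P(1))
  have m: "F \<in> borel_measurable P"
    unfolding measurable_cong_sets[OF P(2) refl] by (rule approx_meas[OF F(1)])
  show ?thesis
    by (rule integrable_const_bound[of _ B]) (use F(2) P(3) m in auto)
qed

lemma weak_duality:
  assumes lf: "lottery_feasible tp \<beta> A p \<zeta> I g gbar x0 s0 P"
    and lam: "lam \<in> Lambda tp \<beta> A I s0"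
  shows "ereal (\<integral>a. Jval tp \<beta> \<zeta> r I g \<gamma> x0 s0 a \<partial>P)
          \<le> (SUP a\<in>AI. ereal (Lag tp \<beta> \<zeta> r I g gbar \<gamma> x0 s0 a lam))"
proof -
  note lb = lf_basic[OF lf]
  interpret prob_space P by (rule lb(1))
  note nn = Lambda_D(1)[OF lam]
  define f where "f t a = (\<Sum>h\<in>shock_hists t. \<Sum>as\<in>ALs t. \<Sum>i<I. \<beta> ^ t * (pit tp s0 h * lam i (h, as)) * phi i h as a)" for t a
  have f_eq: "f t a = \<beta> ^ t * Lin lam t a" if "a \<in> AI" for t a
    unfolding f_def Lin_expand[OF that] by (simp add: sum_distrib_left mult.assoc)
  have phi_int: "integrable P (phi i h as)" if "i < I" for i h as
    by (rule approx_integrable[OF lb(1-3) approx_phi[OF that] phi_bnd'[OF _ that]])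
  have f_int: "integrable P (f t)" for t
    unfolding f_def by (intro Bochner_Integration.integrable_sum integrable_mult_right) (auto intro: phi_int)
  have f_ge: "0 \<le> integral\<^sup>L P (f t)" for t
  proof -
    have "integral\<^sup>L P (f t) = (\<Sum>h\<in>shock_hists t. \<Sum>as\<in>ALs t. \<Sum>i<I. \<beta> ^ t * (pit tp s0 h * lam i (h, as)) * integral\<^sup>L P (phi i h as))"
    proof -
      define C where "C h as i = \<beta> ^ t * (pit tp s0 h * lam i (h, as))" for h as i
      have i1: "integrable P (\<lambda>a. C h as i * phi i h as a)" if "i < I" for h as i
        using phi_int[OF that] by simp
      have i2: "integrable P (\<lambda>a. \<Sum>i<I. C h as i * phi i h as a)" for h as
        by (rule Bochner_Integration.integrable_sum) (use i1 in auto)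
      have i3: "integrable P (\<lambda>a. \<Sum>as\<in>ALs t. \<Sum>i<I. C h as i * phi i h as a)" for h
        by (rule Bochner_Integration.integrable_sum) (use i2 in auto)
      have e1: "integral\<^sup>L P (\<lambda>a. \<Sum>i<I. C h as i * phi i h as a) = (\<Sum>i<I. C h as i * integral\<^sup>L P (phi i h as))" for h as
        by (subst Bochner_Integration.integral_sum) (use i1 in auto)
      have e2: "integral\<^sup>L P (\<lambda>a. \<Sum>as\<in>ALs t. \<Sum>i<I. C h as i * phi i h as a) = (\<Sum>as\<in>ALs t. \<Sum>i<I. C h as i * integral\<^sup>L P (phi i h as))" for h
        by (subst Bochner_Integration.integral_sum) (use i2 e1 in auto)
      show ?thesis unfolding f_def C_def[symmetric]
        by (subst Bochner_Integration.integral_sum) (use i3 e2 in auto)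
    qed
    also have "\<dots> \<ge> 0"
    proof (intro sum_nonneg)
      fix h :: "'s hist" and as :: "(real^'n) list" and i :: nat assume h: "h \<in> shock_hists t" and as: "as \<in> ALs t" and i: "i \<in> {..<I}"
      show "0 \<le> \<beta> ^ t * (pit tp s0 h * lam i (h, as)) * integral\<^sup>L P (phi i h as)"
      proof (cases "fst h = s0")
        case True
        have hp: "(h, as) \<in> preH A t" using h as by (simp add: preH_eq)
        have "\<forall>(h', as')\<in>preH A t. fst h' = s0 \<longrightarrow> (\<forall>i<I. 0 \<le> integral\<^sup>L P (phi i h' as'))"
          using lf unfolding lottery_feasible_def phi_def by blast
        from bspec[OF this hp] have "0 \<le> integral\<^sup>L P (phi i h as)" using True i by simp
        thus ?thesis using \<beta> nn pit_nonneg by (intro mult_nonneg_nonneg) auto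
      next
        case False thus ?thesis by (simp add: pit_def)
      qed
    qed
    finally show ?thesis .
  qed
  have f_bnd: "norm (f t a) \<le> Bphi * lsum lam t" if "a \<in> AI" for t a
    using Lin_bnd[OF that nn, of t] f_eq[OF that] by simp
  have sl: "summable (\<lambda>t. Bphi * lsum lam t)" using Lambda_D(2)[OF lam] by (rule summable_mult)
  have AE_sum: "AE a in P. summable (\<lambda>t. norm (f t a))"
  proof (rule AE_I2)
    fix a assume "a \<in> space P"
    hence a: "a \<in> AI" using lb by simp
    show "summable (\<lambda>t. norm (f t a))"
      by (rule summable_comparison_test'[OF sl, of 0]) (use f_bnd[OF a] in auto)
  qed
  have int_bnd: "norm (\<integral>a. norm (f t a) \<partial>P) \<le> Bphi * lsum lam t" for t
  proof -
    have "(\<integral>a. norm (f t a) \<partial>P) \<le> (\<integral>a. Bphi * lsum lam t \<partial>P)"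
      by (rule Bochner_Integration.integral_mono) (use f_int f_bnd lb in auto)
    also have "\<dots> = Bphi * lsum lam t" using prob_space by simp
    finally show ?thesis by simp
  qed
  have sumint: "summable (\<lambda>t. \<integral>a. norm (f t a) \<partial>P)"
    by (rule summable_comparison_test'[OF sl, of 0]) (use int_bnd in auto)
  have S_int: "integrable P (\<lambda>a. \<Sum>t. f t a)"
    by (rule integrable_suminf[OF f_int AE_sum sumint])
  have S_eq: "(\<integral>a. (\<Sum>t. f t a) \<partial>P) = (\<Sum>t. integral\<^sup>L P (f t))"
    by (rule integral_suminf[OF f_int AE_sum sumint])
  have sum_int_f: "summable (\<lambda>t. integral\<^sup>L P (f t))"
  proof (rule summable_comparison_test'[OF sl, of 0])
    fix t :: nat
    have a1: "\<bar>integral\<^sup>L P (f t)\<bar> \<le> (\<integral>a. \<bar>f t a\<bar> \<partial>P)" using integral_norm_bound[of P "f t"] by simp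
    have "\<bar>\<integral>a. \<bar>f t a\<bar> \<partial>P\<bar> \<le> Bphi * lsum lam t" using int_bnd[of t] by simp
    hence a2: "(\<integral>a. \<bar>f t a\<bar> \<partial>P) \<le> Bphi * lsum lam t" by (rule abs_le_D1[THEN order.trans, rotated]) simp
    have "\<bar>integral\<^sup>L P (f t)\<bar> \<le> Bphi * lsum lam t" using a1 a2 by linarith
    thus "norm (integral\<^sup>L P (f t)) \<le> Bphi * lsum lam t" by simp
  qed
  have S_ge: "0 \<le> (\<integral>a. (\<Sum>t. f t a) \<partial>P)"
    unfolding S_eq by (rule suminf_nonneg[OF sum_int_f f_ge])
  have J_int: "integrable P Jf"
    by (rule approx_integrable[OF lb(1-3) approx_J Jf_bnds(2)])
  have Lag_eq2: "Lag tp \<beta> \<zeta> r I g gbar \<gamma> x0 s0 a lam = Jf a + (\<Sum>t. f t a)" if "a \<in> AI" for a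
    using Lag_split[OF that lam] f_eq[OF that] by simp
  define LL where "LL a = Lag tp \<beta> \<zeta> r I g gbar \<gamma> x0 s0 a lam" for a
  have LL_int: "integrable P LL"
    by (rule Bochner_Integration.integrable_cong[THEN iffD1, OF refl _ Bochner_Integration.integrable_add[OF J_int S_int]])
       (use Lag_eq2 lb in \<open>auto simp: LL_def\<close>)
  have LL_ge: "(\<integral>a. Jf a \<partial>P) \<le> integral\<^sup>L P LL"
  proof -
    have "integral\<^sup>L P LL = (\<integral>a. Jf a + (\<Sum>t. f t a) \<partial>P)"
      by (rule Bochner_Integration.integral_cong) (use Lag_eq2 lb in \<open>auto simp: LL_def\<close>)
    also have "\<dots> = (\<integral>a. Jf a \<partial>P) + (\<integral>a. (\<Sum>t. f t a) \<partial>P)"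
      by (rule Bochner_Integration.integral_add[OF J_int S_int])
    finally show ?thesis using S_ge by simp
  qed
  have LL_le: "ereal (integral\<^sup>L P LL) \<le> (SUP a\<in>AI. ereal (LL a))"
  proof (cases "(SUP a\<in>AI. ereal (LL a))")
    case (real s)
    have "LL a \<le> s" if "a \<in> AI" for a
      using SUP_upper[OF that, of "\<lambda>a. ereal (LL a)"] real by simp
    hence "integral\<^sup>L P LL \<le> (\<integral>a. s \<partial>P)"
      by (intro Bochner_Integration.integral_mono LL_int) (use lb in auto)
    also have "\<dots> = s" using prob_space by simp
    finally show ?thesis using real by simp
  next
    case PInf thus ?thesis by simp
  next
    case MInf
    obtain a where "a \<in> AI" using not_empty lb by auto
    hence "ereal (LL a) \<le> (SUP a\<in>AI. ereal (LL a))" by (rule SUP_upper)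
    thus ?thesis using MInf by simp
  qed
  have "ereal (\<integral>a. Jval tp \<beta> \<zeta> r I g \<gamma> x0 s0 a \<partial>P) = ereal (\<integral>a. Jf a \<partial>P)" by (simp add: Jf_def)
  also have "\<dots> \<le> ereal (integral\<^sup>L P LL)" using LL_ge by simp
  also have "\<dots> \<le> (SUP a\<in>AI. ereal (LL a))" by (rule LL_le)
  finally show ?thesis unfolding LL_def .
qed

end

context dual begin

definition avg :: "('s hist \<Rightarrow> real^'n) list \<Rightarrow> (('s hist \<Rightarrow> real^'n) \<Rightarrow> real) \<Rightarrow> real" where
  "avg L F = (\<Sum>a\<leftarrow>L. F a) / real (length L)"

definition KC :: "nat \<Rightarrow> ('s hist \<times> (real^'n) list \<times> nat) set" where
  "KC T = (SIGMA h:Dlev T. SIGMA as:ALs (hlen h). {..<I})"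

lemma finite_KC: "finite (KC T)"
  unfolding KC_def by (intro finite_SigmaI finite_Dlev finite_ALs) auto

lemma Dlev_UN: "Dlev T = (\<Union>t\<in>{..T}. shock_hists t)"
  by (auto simp: Dlev_def shock_hists_def)

lemma sum_Dlev: fixes F :: "'s hist \<Rightarrow> 'b::comm_monoid_add"
  shows "(\<Sum>h\<in>Dlev T. F h) = (\<Sum>t\<le>T. \<Sum>h\<in>shock_hists t. F h)"
proof -
  have fin: "\<forall>t\<in>{..T}. finite (shock_hists t :: 's hist set)" by (simp add: finite_shock_hists)
  have disj: "\<forall>i\<in>{..T}. \<forall>j\<in>{..T}. i \<noteq> j \<longrightarrow> shock_hists i \<inter> shock_hists j = ({} :: 's hist set)"
    by (auto simp: shock_hists_def)
  show ?thesis unfolding Dlev_UN by (rule sum.UNION_disjoint[OF _ fin disj]) simp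
qed

lemma sum_Sigma_split: "finite S \<Longrightarrow> (\<forall>x\<in>S. finite (B x)) \<Longrightarrow> (\<Sum>k\<in>Sigma S B. f k) = (\<Sum>x\<in>S. \<Sum>y\<in>B x. f (x, y))"
  by (simp add: sum.Sigma)

lemma sum_KC: "(\<Sum>k\<in>KC T. f k) = (\<Sum>h\<in>Dlev T. \<Sum>as\<in>ALs (hlen h). \<Sum>i<I. f (h, as, i))"
  unfolding KC_def
  by (simp add: sum_Sigma_split finite_Dlev finite_ALs)

definition psi :: "real \<Rightarrow> ('s hist \<times> (real^'n) list \<times> nat) option \<Rightarrow> ('s hist \<Rightarrow> real^'n) \<Rightarrow> real" where
  "psi c k a = (case k of None \<Rightarrow> Jf a - c
      | Some (h, as, i) \<Rightarrow> (if fst h = s0 then phi i h as a else 0))"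

lemma Lin_finite:
  fixes T :: nat and \<mu> :: "('s hist \<times> (real^'n) list \<times> nat) option \<Rightarrow> real"
  assumes a: "a \<in> AI" and m0: "\<mu> None > 0"
  defines "lam \<equiv> (\<lambda>i (h, as). if fst h = s0 \<and> (h, as, i) \<in> KC T
      then \<mu> (Some (h, as, i)) / (\<mu> None * \<beta> ^ hlen h * pit tp s0 h) else 0)"
  shows "(\<Sum>t. \<beta> ^ t * Lin lam t a) = (\<Sum>k\<in>KC T. \<mu> (Some k) / \<mu> None * psi c (Some k) a)"
proof -
  have zero: "\<beta> ^ t * Lin lam t a = 0" if "t \<notin> {..T}" for t
  proof -
    have "lam i (h, as) = 0" if "h \<in> shock_hists t" for i h as
      using that \<open>t \<notin> {..T}\<close> by (auto simp: lam_def KC_def Dlev_def shock_hists_def)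
    thus ?thesis unfolding Lin_expand[OF a] by simp
  qed
  have "(\<Sum>t. \<beta> ^ t * Lin lam t a) = (\<Sum>t\<le>T. \<beta> ^ t * Lin lam t a)"
    by (rule suminf_finite) (use zero in auto)
  also have "\<dots> = (\<Sum>t\<le>T. \<Sum>h\<in>shock_hists t. \<Sum>as\<in>ALs (hlen h). \<Sum>i<I.
        \<beta> ^ hlen h * pit tp s0 h * lam i (h, as) * phi i h as a)"
    unfolding Lin_expand[OF a]
    by (intro sum.cong refl) (auto simp: shock_hists_def sum_distrib_left mult_ac)
  also have "\<dots> = (\<Sum>h\<in>Dlev T. \<Sum>as\<in>ALs (hlen h). \<Sum>i<I.
        \<beta> ^ hlen h * pit tp s0 h * lam i (h, as) * phi i h as a)"
    by (rule sum_Dlev[symmetric])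
  also have "\<dots> = (\<Sum>h\<in>Dlev T. \<Sum>as\<in>ALs (hlen h). \<Sum>i<I. \<mu> (Some (h, as, i)) / \<mu> None * psi c (Some (h, as, i)) a)"
  proof (intro sum.cong refl)
    fix h :: "'s hist" and as :: "(real^'n) list" and i :: nat assume h: "h \<in> Dlev T" and as: "as \<in> ALs (hlen h)" and i: "i \<in> {..<I}"
    have k: "(h, as, i) \<in> KC T" using h as i by (simp add: KC_def)
    show "\<beta> ^ hlen h * pit tp s0 h * lam i (h, as) * phi i h as a = \<mu> (Some (h, as, i)) / \<mu> None * psi c (Some (h, as, i)) a"
    proof (cases "fst h = s0")
      case True
      have "pit tp s0 h > 0" by (rule pit_pos[OF True])
      thus ?thesis using True k m0 \<beta> by (simp add: lam_def psi_def field_simps)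
    next
      case False thus ?thesis by (simp add: lam_def psi_def)
    qed
  qed
  also have "\<dots> = (\<Sum>k\<in>KC T. \<mu> (Some k) / \<mu> None * psi c (Some k) a)"
    by (simp add: sum_KC)
  finally show ?thesis .
qed

lemma lam_Lambda:
  fixes T :: nat and \<mu> :: "('s hist \<times> (real^'n) list \<times> nat) option \<Rightarrow> real"
  assumes m0: "\<mu> None > 0" and mnn: "\<And>k. k \<in> KC T \<Longrightarrow> \<mu> (Some k) \<ge> 0"
  defines "lam \<equiv> (\<lambda>i (h, as). if fst h = s0 \<and> (h, as, i) \<in> KC T
      then \<mu> (Some (h, as, i)) / (\<mu> None * \<beta> ^ hlen h * pit tp s0 h) else 0)"
  shows "lam \<in> Lambda tp \<beta> A I s0"
proof -
  have nn: "0 \<le> lam i hh" for i hh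
  proof -
    obtain h as where hh: "hh = (h, as)" by (cases hh)
    show ?thesis using m0 mnn[of "(h, as, i)"] pit_pos[of h] \<beta> unfolding hh lam_def
      by (auto intro!: divide_nonneg_pos)
  qed
  have "summable (lsum lam)"
  proof (rule summable_finite[of "{..T}"])
    fix t assume t: "t \<notin> {..T}"
    have "lam i hh = 0" if "hh \<in> preH A t" for i hh
      using that t by (auto simp: lam_def KC_def Dlev_def preH_def)
    thus "lsum lam t = 0" unfolding lsum_def by simp
  qed simp
  thus ?thesis using nn unfolding Lambda_def lsum_def by auto
qed

lemma stepA:
  assumes c: "ereal c < Dval tp \<beta> A p \<zeta> r I g gbar \<gamma> x0 s0" and e: "e > 0"
  shows "\<exists>L. L \<noteq> [] \<and> set L \<subseteq> AI \<and> c - e \<le> avg L Jf \<and>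
     (\<forall>h as i. h \<in> Dlev T \<longrightarrow> fst h = s0 \<longrightarrow> as \<in> ALs (hlen h) \<longrightarrow> i < I \<longrightarrow> - e \<le> avg L (phi i h as))"
proof -
  define K where "K = insert None (Some ` KC T)"
  have Kfin: "finite K" unfolding K_def using finite_KC by simp
  have Ksum: "(\<Sum>k\<in>K. f k) = f None + (\<Sum>k\<in>KC T. f (Some k))" for f :: "_ \<Rightarrow> real"
    unfolding K_def using finite_KC by (simp add: sum.reindex)
  define B where "B = Bj / (1 - \<beta>) + \<bar>c\<bar> + Bphi"
  have bnd: "\<bar>psi c k a\<bar> \<le> B" if "k \<in> K" "a \<in> AI" for k a
  proof (cases k)
    case None thus ?thesis using Jf_bnds(2)[OF that(2)] Bphi_nn unfolding psi_def B_def by auto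
  next
    case (Some k')
    then obtain h as i where k': "k' = (h, as, i)" by (cases k') auto
    have i: "i < I" using that(1) Some k' by (auto simp: K_def KC_def)
    have "\<bar>psi c k a\<bar> \<le> Bphi" using phi_bnd'[OF that(2) i] Bphi_nn Some k' by (simp add: psi_def)
    moreover have "0 \<le> Bj / (1 - \<beta>)" using Bj_nn \<beta> by simp
    ultimately show ?thesis unfolding B_def by linarith
  qed
  have resp: "\<exists>a\<in>AI. 0 \<le> (\<Sum>k\<in>K. \<mu> k * psi c k a)"
    if mnn: "\<forall>k\<in>K. 0 \<le> \<mu> k" and ms: "sum \<mu> K = 1" for \<mu>
  proof (cases "\<mu> None > 0")
    case True
    define lam where "lam = (\<lambda>i (h, as). if fst h = s0 \<and> (h, as, i) \<in> KC T
      then \<mu> (Some (h, as, i)) / (\<mu> None * \<beta> ^ hlen h * pit tp s0 h) else 0)"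
    have lamL: "lam \<in> Lambda tp \<beta> A I s0"
      unfolding lam_def by (rule lam_Lambda[where \<mu>=\<mu> and T=T, OF True]) (use mnn in \<open>auto simp: K_def\<close>)
    have "ereal c < (SUP a\<in>AI. ereal (Lag tp \<beta> \<zeta> r I g gbar \<gamma> x0 s0 a lam))"
      using less_INF_D[OF c[unfolded Dval_def] lamL] .
    then obtain a where a: "a \<in> AI" and ca: "c < Lag tp \<beta> \<zeta> r I g gbar \<gamma> x0 s0 a lam"
      by (auto simp: less_SUP_iff)
    have "Lag tp \<beta> \<zeta> r I g gbar \<gamma> x0 s0 a lam = Jf a + (\<Sum>k\<in>KC T. \<mu> (Some k) / \<mu> None * psi c (Some k) a)"
      using Lag_split[OF a lamL] Lin_finite[where \<mu>=\<mu> and T=T and c=c, OF a True] unfolding lam_def by simp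
    hence "0 < (Jf a - c) + (\<Sum>k\<in>KC T. \<mu> (Some k) / \<mu> None * psi c (Some k) a)" using ca by simp
    hence "0 < \<mu> None * ((Jf a - c) + (\<Sum>k\<in>KC T. \<mu> (Some k) / \<mu> None * psi c (Some k) a))"
      using True by simp
    also have "\<dots> = (\<Sum>k\<in>K. \<mu> k * psi c k a)"
      unfolding Ksum using True by (simp add: psi_def algebra_simps sum_distrib_left)
    finally show ?thesis using a by (intro bexI[of _ a]) auto
  next
    case False
    hence m0: "\<mu> None = 0" using mnn by (auto simp: K_def)
    obtain a where fa: "feasible_plan tp \<beta> A p \<zeta> I g gbar x0 s0 a" using standing[OF x0] by blast
    hence a: "a \<in> AI" and fut: "\<And>h i. fst h = s0 \<Longrightarrow> i < I \<Longrightarrow> gbar i \<le> fut tp \<beta> \<zeta> x0 a (g i) h"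
      unfolding feasible_plan_def by auto
    have "0 \<le> psi c (Some k) a" if "k \<in> KC T" for k
    proof -
      obtain h as i where k: "k = (h, as, i)" by (cases k) auto
      have i: "i < I" using that k by (simp add: KC_def)
      show ?thesis using fut[of h i] i unfolding psi_def k phi_def by auto
    qed
    hence "0 \<le> (\<Sum>k\<in>K. \<mu> k * psi c k a)"
      unfolding Ksum m0 using mnn by (auto simp: K_def intro!: sum_nonneg mult_nonneg_nonneg)
    thus ?thesis using a by blast
  qed
  have "K \<noteq> {}" unfolding K_def by simp
  from hedge[OF Kfin this bnd resp e]
  obtain L where L: "L \<noteq> []" "set L \<subseteq> AI" "\<forall>k\<in>K. - e \<le> (\<Sum>a\<leftarrow>L. psi c k a) / real (length L)"
    by blast
  have lpos: "real (length L) > 0" using L(1) by simp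
  have "- e \<le> (\<Sum>a\<leftarrow>L. psi c None a) / real (length L)" using L(3) by (simp add: K_def)
  also have "(\<Sum>a\<leftarrow>L. psi c None a) / real (length L) = avg L Jf - c"
    using lpos by (simp add: psi_def avg_def sum_list_subtractf sum_list_triv field_simps)
  finally have J: "c - e \<le> avg L Jf" by simp
  have P: "- e \<le> avg L (phi i h as)" if "h \<in> Dlev T" "fst h = s0" "as \<in> ALs (hlen h)" "i < I" for h as i
  proof -
    have "Some (h, as, i) \<in> K" using that by (simp add: K_def KC_def)
    hence "- e \<le> (\<Sum>a\<leftarrow>L. psi c (Some (h, as, i)) a) / real (length L)" using L(3) by blast
    thus ?thesis using that(2) by (simp add: psi_def avg_def)
  qed
  show ?thesis using L(1,2) J P by blast
qed

end

lemma diag_conv_nat: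
  fixes f :: "nat \<Rightarrow> nat \<Rightarrow> real"
  assumes bdd: "\<And>n i. \<bar>f n i\<bar> \<le> M"
  shows "\<exists>s. strict_mono s \<and> (\<forall>i. convergent (\<lambda>k. f (s k) i))"
proof -
  let ?P = "\<lambda>n. \<lambda>s. convergent (\<lambda>k. f (s k) n)"
  interpret nat: subseqs ?P
  proof (unfold convergent_def, unfold subseqs_def, auto)
    fix n :: nat and s :: "nat \<Rightarrow> nat" assume s: "strict_mono s"
    have "bounded {-M..M}"
      using bounded_closed_interval by auto
    moreover have "\<And>k. f (s k) n \<in> {-M..M}"
      using bdd by (simp add: abs_le_iff minus_le_iff)
    ultimately have "\<exists>l s'. strict_mono s' \<and> ((\<lambda>k. f (s k) n) \<circ> s') \<longlonglongrightarrow> l"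
      using compact_Icc compact_imp_seq_compact seq_compactE by metis
    thus "\<exists>s'. strict_mono (s'::nat\<Rightarrow>nat) \<and> (\<exists>l. (\<lambda>k. f (s (s' k)) n) \<longlonglongrightarrow> l)"
      by (auto simp: comp_def)
  qed
  define d where "d = nat.diagseq"
  have subseq: "strict_mono d"
    unfolding d_def using nat.subseq_diagseq by auto
  have cnv: "?P n d" for n
  proof -
    have Pn_seqseq: "?P n (nat.seqseq (Suc n))"
      by (rule nat.seqseq_holds)
    have 1: "(\<lambda>k. f ((nat.seqseq (Suc n) \<circ> (\<lambda>k. nat.fold_reduce (Suc n) k
      (Suc n + k))) k) n) = (\<lambda>k. f (nat.seqseq (Suc n) k) n) \<circ>
      (\<lambda>k. nat.fold_reduce (Suc n) k (Suc n + k))"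
      by auto
    have 2: "?P n (d \<circ> ((+) (Suc n)))"
      unfolding d_def nat.diagseq_seqseq 1
      by (intro convergent_subseq_convergent Pn_seqseq nat.subseq_diagonal_rest)
    then obtain L where 3: "(\<lambda>na. f (d (na + Suc n)) n) \<longlonglongrightarrow> L"
      by (auto simp: add.commute dest: convergentD)
    then have "(\<lambda>k. f (d k) n) \<longlonglongrightarrow> L"
      by (rule LIMSEQ_offset)
    then show ?thesis
      by (auto simp: convergent_def)
  qed
  show ?thesis using subseq cnv by blast
qed

lemma diag_conv:
  fixes f :: "nat \<Rightarrow> 'i \<Rightarrow> real"
  assumes C: "countable C" and bdd: "\<And>n i. i \<in> C \<Longrightarrow> \<bar>f n i\<bar> \<le> M"
  shows "\<exists>s. strict_mono s \<and> (\<forall>i\<in>C. convergent (\<lambda>k. f (s k) i))"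
proof (cases "C = {}")
  case True thus ?thesis by (intro exI[of _ id]) (auto simp: strict_mono_def)
next
  case False
  define r where "r = from_nat_into C"
  have r: "r n \<in> C" for n unfolding r_def by (rule from_nat_into[OF False])
  obtain s where s: "strict_mono s" "\<And>n. convergent (\<lambda>k. f (s k) (r n))"
    using diag_conv_nat[of "\<lambda>n i. f n (r i)" M] bdd r by blast
  have "\<forall>i\<in>C. convergent (\<lambda>k. f (s k) i)"
  proof
    fix i assume "i \<in> C"
    then obtain n where "i = r n" using range_from_nat_into[OF False C] unfolding r_def by blast
    thus "convergent (\<lambda>k. f (s k) i)" using s(2) by simp
  qed
  thus ?thesis using s(1) by blast
qed

lemma sum_list_sum_swap: "(\<Sum>a\<leftarrow>L. \<Sum>v\<in>S. f v a) = (\<Sum>v\<in>S. \<Sum>a\<leftarrow>L. f v a)"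
  by (induction L) (simp_all add: sum.distrib)

context dual begin

lemma avg_sum: "avg L (\<lambda>a. \<Sum>v\<in>S. f v a) = (\<Sum>v\<in>S. avg L (f v))"
  unfolding avg_def by (simp add: sum_list_sum_swap sum_divide_distrib)

lemma avg_cmult: "avg L (\<lambda>a. c * f a) = c * avg L f"
  unfolding avg_def by (simp add: sum_list_const_mult)

lemma avg_cong: "(\<And>a. a \<in> set L \<Longrightarrow> F a = G a) \<Longrightarrow> avg L F = avg L G"
  unfolding avg_def by (metis map_cong)

lemma avg_const: "L \<noteq> [] \<Longrightarrow> avg L (\<lambda>a. c) = c"
  unfolding avg_def by (simp add: sum_list_triv)

lemma avg_mono: "(\<And>a. a \<in> set L \<Longrightarrow> F a \<le> G a) \<Longrightarrow> avg L F \<le> avg L G"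
  unfolding avg_def by (intro divide_right_mono sum_list_mono) auto

lemma avg_abs: "\<bar>avg L F\<bar> \<le> avg L (\<lambda>a. \<bar>F a\<bar>)"
proof -
  have "\<bar>sum_list (map F L)\<bar> \<le> sum_list (map (\<lambda>a. \<bar>F a\<bar>) L)"
    using sum_list_abs[of "map F L"] by (simp add: comp_def)
  thus ?thesis unfolding avg_def by (simp add: abs_divide divide_right_mono)
qed

lemma restrict_RT: "v \<in> RT T \<Longrightarrow> restrict v (Dlev T) = v"
  unfolding RT_def by auto

lemma RT_restrict: "T \<le> T' \<Longrightarrow> v \<in> RT T' \<Longrightarrow> restrict v (Dlev T) \<in> RT T"
proof -
  assume "T \<le> T'" "v \<in> RT T'"
  then obtain a where a: "a \<in> AI" "v = restrict a (Dlev T')" unfolding RT_def by auto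
  have "Dlev T \<subseteq> Dlev T'" using \<open>T \<le> T'\<close> by (auto simp: Dlev_def)
  hence "restrict v (Dlev T) = restrict a (Dlev T)" using a(2) by (auto simp: restrict_def fun_eq_iff)
  thus ?thesis using a(1) unfolding RT_def by blast
qed

lemma ind_sum: assumes a: "a \<in> AI"
  shows "(\<Sum>v\<in>RT T. if restrict a (Dlev T) = v then 1 else 0 :: real) = 1"
proof -
  have "restrict a (Dlev T) \<in> RT T" using a unfolding RT_def by blast
  thus ?thesis by (simp add: sum.delta finite_RT)
qed

lemma ind_cons: assumes a: "a \<in> AI" and T: "T \<le> T'"
  shows "(if restrict a (Dlev T) = v then 1 else 0 :: real)
     = (\<Sum>v'\<in>{v'\<in>RT T'. restrict v' (Dlev T) = v}. if restrict a (Dlev T') = v' then 1 else 0)"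
proof -
  define v0 where "v0 = restrict a (Dlev T')"
  have v0: "v0 \<in> RT T'" using a unfolding RT_def v0_def by blast
  have sub: "Dlev T \<subseteq> Dlev T'" using T by (auto simp: Dlev_def)
  have r: "restrict v0 (Dlev T) = restrict a (Dlev T)"
    unfolding v0_def using sub by (auto simp: restrict_def fun_eq_iff)
  have "(\<Sum>v'\<in>{v'\<in>RT T'. restrict v' (Dlev T) = v}. if v0 = v' then 1 else 0 :: real)
      = (if v0 \<in> {v'\<in>RT T'. restrict v' (Dlev T) = v} then 1 else 0)"
    by (rule sum.delta') (simp add: finite_RT)
  thus ?thesis using v0 r unfolding v0_def by simp
qed

end

locale dual_seq = dual tp A X \<zeta> p r I g gbar \<beta> \<gamma> x0 s0 Br Bg
  for tp :: "'s::finite \<Rightarrow> 's \<Rightarrow> real"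
    and A :: "(real^'n) set" and X :: "(real^'m) set"
    and \<zeta> :: "real^'m \<Rightarrow> real^'n \<Rightarrow> 's \<Rightarrow> real^'m"
    and p r :: "real^'m \<Rightarrow> real^'n \<Rightarrow> 's \<Rightarrow> real"
    and I :: nat and g :: "nat \<Rightarrow> real^'m \<Rightarrow> real^'n \<Rightarrow> 's \<Rightarrow> real"
    and gbar :: "nat \<Rightarrow> real" and \<beta> :: real
    and \<gamma> :: "nat \<Rightarrow> real" and x0 :: "real^'m" and s0 :: 's
    and Br Bg :: real +
  fixes Ls :: "nat \<Rightarrow> ('s hist \<Rightarrow> real^'n) list"
  assumes Ls_ne: "\<And>N. Ls N \<noteq> []" and Ls_AI: "\<And>N. set (Ls N) \<subseteq> AI"
begin

definition qN :: "nat \<Rightarrow> nat \<Rightarrow> ('s hist \<Rightarrow> real^'n) \<Rightarrow> real" where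
  "qN N T v = avg (Ls N) (\<lambda>a. if restrict a (Dlev T) = v then 1 else 0)"

lemma qN_nn: "0 \<le> qN N T v"
  unfolding qN_def avg_def by (intro divide_nonneg_nonneg sum_list_nonneg) auto

lemma qN_le1: "qN N T v \<le> 1"
proof -
  have "qN N T v \<le> avg (Ls N) (\<lambda>a. 1)" unfolding qN_def by (rule avg_mono) auto
  thus ?thesis using avg_const[OF Ls_ne] by simp
qed

lemma qN_sum: "(\<Sum>v\<in>RT T. qN N T v) = 1"
proof -
  have "(\<Sum>v\<in>RT T. qN N T v) = avg (Ls N) (\<lambda>a. \<Sum>v\<in>RT T. if restrict a (Dlev T) = v then 1 else 0)"
    unfolding qN_def by (rule avg_sum[symmetric])
  also have "\<dots> = avg (Ls N) (\<lambda>a. 1)"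
    by (rule avg_cong) (use Ls_AI ind_sum in blast)
  finally show ?thesis using avg_const[OF Ls_ne] by simp
qed

lemma qN_cons: "T \<le> T' \<Longrightarrow> qN N T v = (\<Sum>v'\<in>{v'\<in>RT T'. restrict v' (Dlev T) = v}. qN N T' v')"
  unfolding qN_def avg_sum[symmetric]
  by (rule avg_cong) (use Ls_AI ind_cons in blast)

lemma avg_cyl: assumes "cyl T G" shows "avg (Ls N) G = (\<Sum>v\<in>RT T. G (pk T v) * qN N T v)"
proof -
  have "avg (Ls N) G = avg (Ls N) (\<lambda>a. \<Sum>v\<in>RT T. G (pk T v) * (if restrict a (Dlev T) = v then 1 else 0))"
  proof (rule avg_cong)
    fix a assume "a \<in> set (Ls N)"
    hence a: "a \<in> AI" using Ls_AI by blast
    show "G a = (\<Sum>v\<in>RT T. G (pk T v) * (if restrict a (Dlev T) = v then 1 else 0))"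
      unfolding cyl_decomp[OF assms a]
      by (intro sum.cong refl) (simp add: in_Cy_restrict indicator_def)
  qed
  also have "\<dots> = (\<Sum>v\<in>RT T. G (pk T v) * qN N T v)"
    unfolding avg_sum avg_cmult qN_def ..
  finally show ?thesis .
qed

definition CC :: "(nat \<times> ('s hist \<Rightarrow> real^'n)) set" where "CC = Sigma UNIV RT"

lemma countable_CC: "countable CC"
  unfolding CC_def by (rule countable_SIGMA) (auto intro: countable_finite finite_RT)

definition sq :: "nat \<Rightarrow> nat" where
  "sq = (SOME s. strict_mono s \<and> (\<forall>i\<in>CC. convergent (\<lambda>k. (\<lambda>n (T, v). qN n T v) (s k) i)))"

lemma sq: "strict_mono sq" "\<And>T v. v \<in> RT T \<Longrightarrow> convergent (\<lambda>k. qN (sq k) T v)"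
proof -
  have "\<exists>s. strict_mono s \<and> (\<forall>i\<in>CC. convergent (\<lambda>k. (\<lambda>n (T, v). qN n T v) (s k) i))"
  proof (rule diag_conv[OF countable_CC, where M=1])
    fix n :: nat and i :: "nat \<times> ('s hist \<Rightarrow> real^'n)"
    obtain T v where iv: "i = (T, v)" by (cases i)
    show "\<bar>(\<lambda>n (T, v). qN n T v) n i\<bar> \<le> 1"
      unfolding iv using qN_nn[of n T v] qN_le1[of n T v] by simp
  qed
  from someI_ex[OF this] have "strict_mono sq" "\<forall>i\<in>CC. convergent (\<lambda>k. (\<lambda>n (T, v). qN n T v) (sq k) i)"
    unfolding sq_def by auto
  thus "strict_mono sq" "\<And>T v. v \<in> RT T \<Longrightarrow> convergent (\<lambda>k. qN (sq k) T v)"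
    unfolding CC_def by auto
qed

definition q :: "nat \<Rightarrow> ('s hist \<Rightarrow> real^'n) \<Rightarrow> real" where
  "q T v = (if v \<in> RT T then lim (\<lambda>k. qN (sq k) T v) else 0)"

lemma q_lim: "v \<in> RT T \<Longrightarrow> (\<lambda>k. qN (sq k) T v) \<longlonglongrightarrow> q T v"
  unfolding q_def using sq(2) by (simp add: convergent_LIMSEQ_iff)

lemma q_nn: "0 \<le> q T v"
proof (cases "v \<in> RT T")
  case True thus ?thesis using q_lim[OF True] qN_nn by (intro LIMSEQ_le_const) auto
qed (simp add: q_def)

lemma q_sum: "(\<Sum>v\<in>RT T. q T v) = 1"
proof -
  have "(\<lambda>k. \<Sum>v\<in>RT T. qN (sq k) T v) \<longlonglongrightarrow> (\<Sum>v\<in>RT T. q T v)"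
    by (intro tendsto_sum q_lim)
  thus ?thesis unfolding qN_sum by (simp add: LIMSEQ_const_iff)
qed

lemma q_cons: assumes T: "T \<le> T'" and v: "v \<in> RT T"
  shows "q T v = (\<Sum>v'\<in>{v'\<in>RT T'. restrict v' (Dlev T) = v}. q T' v')"
proof -
  have "(\<lambda>k. \<Sum>v'\<in>{v'\<in>RT T'. restrict v' (Dlev T) = v}. qN (sq k) T' v') \<longlonglongrightarrow>
      (\<Sum>v'\<in>{v'\<in>RT T'. restrict v' (Dlev T) = v}. q T' v')"
    by (intro tendsto_sum q_lim) auto
  hence "(\<lambda>k. qN (sq k) T v) \<longlonglongrightarrow> (\<Sum>v'\<in>{v'\<in>RT T'. restrict v' (Dlev T) = v}. q T' v')"
    by (simp add: qN_cons[OF T])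
  thus ?thesis using q_lim[OF v] LIMSEQ_unique by blast
qed

lemma q_cons': assumes T: "T \<le> T'" 
  shows "q T v = (\<Sum>v'\<in>{v'\<in>RT T'. restrict v' (Dlev T) = v}. q T' v')"
proof (cases "v \<in> RT T")
  case True thus ?thesis using q_cons[OF T] by simp
next
  case False
  have e: "{v'\<in>RT T'. restrict v' (Dlev T) = v} = {}" using RT_restrict[OF T] False by auto
  show ?thesis unfolding e using False by (simp add: q_def)
qed

end

lemma distr_pmf_eq:
  assumes "map_pmf f p1 = map_pmf g p2" "\<And>x. f x \<in> space N" "\<And>x. g x \<in> space N"
  shows "distr (measure_pmf p1) N f = distr (measure_pmf p2) N g"
proof (rule measure_eqI)
  show "sets (distr (measure_pmf p1) N f) = sets (distr (measure_pmf p2) N g)" by simp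
  fix X assume "X \<in> sets (distr (measure_pmf p1) N f)"
  hence X: "X \<in> sets N" by simp
  have mf: "f \<in> measurable (measure_pmf p1) N" and mg: "g \<in> measurable (measure_pmf p2) N"
    using assms(2,3) by auto
  have "emeasure (distr (measure_pmf p1) N f) X = emeasure (measure_pmf p1) (f -` X)"
    by (simp add: emeasure_distr[OF mf X])
  also have "\<dots> = emeasure (measure_pmf (map_pmf f p1)) X" by (simp add: emeasure_map_pmf)
  also have "\<dots> = emeasure (measure_pmf (map_pmf g p2)) X" using assms(1) by simp
  also have "\<dots> = emeasure (measure_pmf p2) (g -` X)" by (simp add: emeasure_map_pmf)
  also have "\<dots> = emeasure (distr (measure_pmf p2) N g) X"
    by (simp add: emeasure_distr[OF mg X])
  finally show "emeasure (distr (measure_pmf p1) N f) X = emeasure (distr (measure_pmf p2) N g) X" .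
qed

context dual_seq begin

lemma q_zero: "v \<notin> RT T \<Longrightarrow> q T v = 0"
  by (simp add: q_def)

lemma q_int: "(\<integral>\<^sup>+v. ennreal (q T v) \<partial>count_space UNIV) = 1"
proof -
  have "(\<integral>\<^sup>+v. ennreal (q T v) \<partial>count_space UNIV) = (\<Sum>v\<in>RT T. ennreal (q T v))"
    by (rule nn_integral_count_space') (auto simp: finite_RT q_zero)
  also have "\<dots> = ennreal (\<Sum>v\<in>RT T. q T v)" by (rule sum_ennreal) (simp add: q_nn)
  finally show ?thesis by (simp add: q_sum)
qed

definition mu :: "nat \<Rightarrow> ('s hist \<Rightarrow> real^'n) pmf" where
  "mu T = embed_pmf (q T)"

lemma pmf_mu: "pmf (mu T) v = q T v"
  unfolding mu_def by (rule pmf_embed_pmf[OF q_nn q_int])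

lemma measure_mu: "measure (mu T) S = (\<Sum>v\<in>RT T \<inter> S. q T v)"
proof -
  have sp: "set_pmf (mu T) \<subseteq> RT T"
  proof
    fix x assume "x \<in> set_pmf (mu T)"
    hence "q T x \<noteq> 0" by (simp add: set_pmf_iff pmf_mu)
    thus "x \<in> RT T" using q_zero by blast
  qed
  have "measure (mu T) S = measure (mu T) (S \<inter> set_pmf (mu T))" by (simp add: measure_Int_set_pmf)
  also have "\<dots> = measure (mu T) ((RT T \<inter> S) \<inter> set_pmf (mu T))"
  proof -
    have "(RT T \<inter> S) \<inter> set_pmf (mu T) = S \<inter> set_pmf (mu T)" using sp by blast
    thus ?thesis by simp
  qed
  also have "\<dots> = measure (mu T) (RT T \<inter> S)" by (simp add: measure_Int_set_pmf)
  also have "\<dots> = (\<Sum>v\<in>RT T \<inter> S. q T v)"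
    by (simp add: measure_measure_pmf_finite finite_RT pmf_mu)
  finally show ?thesis .
qed

lemma mu_cons: assumes T: "T \<le> T'" shows "map_pmf (\<lambda>v. restrict v (Dlev T)) (mu T') = mu T"
proof (rule pmf_eqI)
  fix x
  have "pmf (map_pmf (\<lambda>v. restrict v (Dlev T)) (mu T')) x = measure (mu T') ((\<lambda>v. restrict v (Dlev T)) -` {x})"
    by (rule pmf_map)
  also have "\<dots> = (\<Sum>v\<in>RT T' \<inter> (\<lambda>v. restrict v (Dlev T)) -` {x}. q T' v)" by (rule measure_mu)
  also have "RT T' \<inter> (\<lambda>v. restrict v (Dlev T)) -` {x} = {v'\<in>RT T'. restrict v' (Dlev T) = x}" by auto
  also have "(\<Sum>v\<in>{v'\<in>RT T'. restrict v' (Dlev T) = x}. q T' v) = q T x" by (rule q_cons'[OF T, symmetric])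
  also have "q T x = pmf (mu T) x" by (simp add: pmf_mu)
  finally show "pmf (map_pmf (\<lambda>v. restrict v (Dlev T)) (mu T')) x = pmf (mu T) x" .
qed

definition lev :: "'s hist set \<Rightarrow> nat" where
  "lev J = (if J = {} then 0 else Max (hlen ` J))"

lemma lev: "finite J \<Longrightarrow> J \<subseteq> Dlev (lev J)"
  unfolding lev_def Dlev_def by (auto intro: Max_ge)

abbreviation "PB J \<equiv> Pi\<^sub>M J (\<lambda>_. (borel :: (real^'n) measure))"

definition Pf :: "'s hist set \<Rightarrow> ('s hist \<Rightarrow> real^'n) measure" where
  "Pf J = distr (measure_pmf (mu (lev J))) (PB J) (\<lambda>v. restrict v J)"

lemma restrict_space_PB: "restrict v J \<in> space (PB J)"
  by (simp add: space_PiM)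

lemma map_restrict_indep:
  assumes J: "J \<subseteq> Dlev T1" and T: "T1 \<le> T2"
  shows "map_pmf (\<lambda>v. restrict v J) (mu T2) = map_pmf (\<lambda>v. restrict v J) (mu T1)"
proof -
  have "map_pmf (\<lambda>v. restrict v J) (mu T2) = map_pmf ((\<lambda>v. restrict v J) \<circ> (\<lambda>v. restrict v (Dlev T1))) (mu T2)"
    using J by (intro map_pmf_cong refl) (auto simp: restrict_def fun_eq_iff subset_iff)
  also have "\<dots> = map_pmf (\<lambda>v. restrict v J) (map_pmf (\<lambda>v. restrict v (Dlev T1)) (mu T2))"
    by (simp add: map_pmf_comp comp_def)
  also have "\<dots> = map_pmf (\<lambda>v. restrict v J) (mu T1)" by (simp add: mu_cons[OF T])
  finally show ?thesis .
qed

lemma Pf_any: assumes J: "finite J" "J \<subseteq> Dlev T"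
  shows "Pf J = distr (measure_pmf (mu T)) (PB J) (\<lambda>v. restrict v J)"
  unfolding Pf_def
proof (rule distr_pmf_eq[OF _ restrict_space_PB restrict_space_PB])
  show "map_pmf (\<lambda>v. restrict v J) (mu (lev J)) = map_pmf (\<lambda>v. restrict v J) (mu T)"
  proof (cases "lev J \<le> T")
    case True thus ?thesis using map_restrict_indep[OF lev[OF J(1)] True] by simp
  next
    case False thus ?thesis using map_restrict_indep[OF J(2), of "lev J"] by simp
  qed
qed

lemma Pf_prob: "prob_space (Pf J)"
  unfolding Pf_def by (rule measure_pmf.prob_space_distr) (simp add: restrict_space_PB)

lemma Pf_cons: fixes J H :: "'s hist set" assumes JH: "J \<subseteq> H" "finite H"
  shows "Pf J = distr (Pf H) (PB J) (\<lambda>f. restrict f J)"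
proof -
  have fJ: "finite J" using JH finite_subset by blast
  have HT: "H \<subseteq> Dlev (lev H)" by (rule lev[OF JH(2)])
  have "distr (Pf H) (PB J) (\<lambda>f. restrict f J)
      = distr (distr (measure_pmf (mu (lev H))) (PB H) (\<lambda>v. restrict v H)) (PB J) (\<lambda>f. restrict f J)"
    by (simp add: Pf_def)
  also have "\<dots> = distr (measure_pmf (mu (lev H))) (PB J) ((\<lambda>f. restrict f J) \<circ> (\<lambda>v. restrict v H))"
    by (rule distr_distr) (auto intro: measurable_restrict_subset[OF JH(1)] simp: restrict_space_PB)
  also have "((\<lambda>f. restrict f J) \<circ> (\<lambda>v. restrict v H)) = (\<lambda>v. restrict v J)"
    using JH(1) by (auto simp: restrict_def fun_eq_iff subset_iff)
  also have "distr (measure_pmf (mu (lev H))) (PB J) (\<lambda>v. restrict v J) = Pf J"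
    using Pf_any[OF fJ, of "lev H"] JH(1) HT by auto
  finally have "distr (Pf H) (PB J) (\<lambda>f. restrict f J) = Pf J" .
  thus "Pf J = distr (Pf H) (PB J) (\<lambda>f. restrict f J)" by (rule sym)
qed

lemma projfam: "projective_family UNIV Pf (\<lambda>_. borel)"
  apply (rule projective_family.intro)
   apply (erule Pf_cons, assumption)
  apply (rule Pf_prob)
  done

sublocale PP: polish_projective UNIV Pf
  unfolding polish_projective_def by (rule projfam)

lemma emb_eq: "prod_emb UNIV (\<lambda>_. borel :: (real^'n) measure) J Y0 = {a. restrict a J \<in> Y0}"
  by (auto simp: prod_emb_def space_PiM)

lemma lim_emb: assumes "finite J" "Y0 \<in> sets (PB J)"
  shows "emeasure PP.lim {a. restrict a J \<in> Y0} = emeasure (Pf J) Y0"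
  using PP.emeasure_lim_emb[of J Y0] assms by (simp add: emb_eq)

lemma sets_lim: "sets PP.lim = sets M0"
  by (rule PP.sets_lim)

lemma space_lim: "space PP.lim = UNIV"
  using sets_eq_imp_space_eq[OF sets_lim] by (simp add: space_PiM)

lemma finite_in_PB:
  assumes "finite D" "finite Y" "Y \<subseteq> PiE D (\<lambda>_. UNIV)"
  shows "Y \<in> sets (PB D)"
proof -
  have "Y = (\<Union>v\<in>Y. PiE D (\<lambda>h. {v h}))"
  proof
    show "Y \<subseteq> (\<Union>v\<in>Y. PiE D (\<lambda>h. {v h}))" using assms(3) by (auto simp: PiE_iff)
    show "(\<Union>v\<in>Y. PiE D (\<lambda>h. {v h})) \<subseteq> Y"
    proof
      fix w assume "w \<in> (\<Union>v\<in>Y. PiE D (\<lambda>h. {v h}))"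
      then obtain v where v: "v \<in> Y" "w \<in> PiE D (\<lambda>h. {v h})" by blast
      have "v \<in> extensional D" using v(1) assms(3) by (auto simp: PiE_def)
      hence "w = v" using v(2) by (auto simp: PiE_def extensional_def fun_eq_iff)
      thus "w \<in> Y" using v(1) by simp
    qed
  qed
  also have "\<dots> \<in> sets (PB D)"
    by (intro sets.finite_UN assms(2) sets_PiM_I_finite assms(1)) auto
  finally show ?thesis .
qed

end

context dual_seq begin

definition AIT :: "nat \<Rightarrow> ('s hist \<Rightarrow> real^'n) set" where
  "AIT T = {a. \<forall>h\<in>Dlev T. a h \<in> A \<and> 0 \<le> p (xp a h) (a h) (hlast h)}"

lemma AI_INT: "AI = (\<Inter>T. AIT T)"
proof
  show "AI \<subseteq> (\<Inter>T. AIT T)" by (auto simp: AIT_def AI_A AI_p)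
  show "(\<Inter>T. AIT T) \<subseteq> AI"
  proof
    fix a assume "a \<in> (\<Inter>T. AIT T)"
    have "a h \<in> A \<and> 0 \<le> p (xp a h) (a h) (hlast h)" for h
    proof -
      have "a \<in> AIT (hlen h)" using \<open>a \<in> (\<Inter>T. AIT T)\<close> by blast
      moreover have "h \<in> Dlev (hlen h)" by (simp add: Dlev_def)
      ultimately show ?thesis unfolding AIT_def by blast
    qed
    hence "\<forall>h. a h \<in> A \<and> 0 \<le> p (xp a h) (a h) (hlast h)" by blast
    thus "a \<in> AI" by (simp add: Ainf_def)
  qed
qed

definition YT :: "nat \<Rightarrow> ('s hist \<Rightarrow> real^'n) set" where
  "YT T = (\<lambda>a. restrict a (Dlev T)) ` AIT T"

lemma AIT_emb: "AIT T = {a. restrict a (Dlev T) \<in> YT T}"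
proof
  show "AIT T \<subseteq> {a. restrict a (Dlev T) \<in> YT T}" by (auto simp: YT_def)
  show "{a. restrict a (Dlev T) \<in> YT T} \<subseteq> AIT T"
  proof
    fix a assume "a \<in> {a. restrict a (Dlev T) \<in> YT T}"
    then obtain b where b: "b \<in> AIT T" "restrict a (Dlev T) = restrict b (Dlev T)"
      by (auto simp: YT_def)
    have ag: "\<forall>h\<in>Dlev T. a h = b h" using b(2) by (metis restrict_apply')
    show "a \<in> AIT T" unfolding AIT_def
    proof (intro CollectI ballI)
      fix h :: "'s hist" assume h: "h \<in> Dlev T"
      have "hlen h \<le> T" using h by (simp add: Dlev_def)
      thus "a h \<in> A \<and> 0 \<le> p (xp a h) (a h) (hlast h)"
        using agree_xp[OF ag] b(1) h by (auto simp: AIT_def)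
    qed
  qed
qed

lemma YT_sub: "YT T \<subseteq> PiE (Dlev T) (\<lambda>_. A)"
  unfolding YT_def AIT_def by auto

lemma YT_sets: "YT T \<in> sets (PB (Dlev T))"
proof (rule finite_in_PB[OF finite_Dlev])
  show "finite (YT T)" by (rule finite_subset[OF YT_sub]) (intro finite_PiE finite_Dlev A_fin)
  show "YT T \<subseteq> PiE (Dlev T) (\<lambda>_. UNIV)" using YT_sub by (auto simp: PiE_def)
qed

lemma RT_YT: "RT T \<subseteq> YT T"
  unfolding RT_def YT_def AI_INT by auto

lemma lim_AIT: "emeasure PP.lim (AIT T) = 1"
proof -
  have "emeasure PP.lim (AIT T) = emeasure (Pf (Dlev T)) (YT T)"
    unfolding AIT_emb by (rule lim_emb[OF finite_Dlev YT_sets])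
  also have "\<dots> = emeasure (distr (measure_pmf (mu T)) (PB (Dlev T)) (\<lambda>v. restrict v (Dlev T))) (YT T)"
    by (simp add: Pf_any[OF finite_Dlev order_refl])
  also have "\<dots> = emeasure (mu T) ((\<lambda>v. restrict v (Dlev T)) -` YT T)"
    by (subst emeasure_distr) (auto simp: YT_sets restrict_space_PB)
  also have "\<dots> = ennreal (measure (mu T) ((\<lambda>v. restrict v (Dlev T)) -` YT T))"
    by (simp add: measure_pmf.emeasure_eq_measure)
  also have "measure (mu T) ((\<lambda>v. restrict v (Dlev T)) -` YT T) = (\<Sum>v\<in>RT T. q T v)"
  proof -
    have "RT T \<inter> (\<lambda>v. restrict v (Dlev T)) -` YT T = RT T"
    proof (intro equalityI subsetI)
      fix x assume x: "x \<in> RT T"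
      hence "restrict x (Dlev T) \<in> YT T" using restrict_RT[OF x] RT_YT by auto
      thus "x \<in> RT T \<inter> (\<lambda>v. restrict v (Dlev T)) -` YT T" using x by simp
    qed auto
    thus ?thesis by (simp add: measure_mu)
  qed
  finally show ?thesis by (simp add: q_sum)
qed

lemma AIT_sets0: "AIT T \<in> sets M0"
proof -
  have "AIT T = prod_emb UNIV (\<lambda>_. borel :: (real^'n) measure) (Dlev T) (YT T)"
    by (simp add: emb_eq AIT_emb)
  also have "\<dots> \<in> sets (Pi\<^sub>M UNIV (\<lambda>_. borel :: (real^'n) measure))"
    by (rule measurable_prod_emb) (auto simp: YT_sets)
  finally show ?thesis .
qed

lemma AI_sets0: "AI \<in> sets M0"
  unfolding AI_INT by (intro sets.countable_INT) (auto simp: AIT_sets0)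

lemma AI_sets: "AI \<in> sets PP.lim"
  using AI_sets0 by simp

lemma lim_AI: "emeasure PP.lim AI = 1"
proof -
  have "AE a in PP.lim. a \<in> AIT T" for T
    using PP.P.AE_prob_1[of "AIT T"] lim_AIT[of T] by (simp add: PP.P.emeasure_eq_measure)
  hence "AE a in PP.lim. \<forall>T. a \<in> AIT T" by (simp add: AE_all_countable)
  hence "AE a in PP.lim. a \<in> AI" by (simp add: AI_INT)
  thus ?thesis by (rule PP.P.emeasure_eq_1_AE[OF AI_sets])
qed

definition "Pm = restrict_space PP.lim AI"

lemma Pm_prob: "prob_space Pm"
  unfolding Pm_def by (rule prob_space_restrict_space[OF AI_sets lim_AI])

lemma sets_Pm: "sets Pm = sets (restrict_space borel AI)"
  unfolding Pm_def sets_MA[symmetric] by (rule sets_restrict_space_cong[OF sets_lim])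

lemma space_Pm: "space Pm = AI"
  unfolding Pm_def by (simp add: space_restrict_space space_lim space_PiM)

lemma measure_Cy: assumes v: "v \<in> RT T" shows "measure Pm (Cy T v \<inter> AI) = q T v"
proof -
  have Cy_lim: "Cy T v \<in> sets PP.lim" using Cy_meas sets_lim by simp
  have "measure Pm (Cy T v \<inter> AI) = measure PP.lim (Cy T v \<inter> AI)"
    unfolding Pm_def by (rule measure_restrict_space) (auto simp: space_lim AI_sets0 space_PiM)
  also have "\<dots> = measure PP.lim (Cy T v)"
  proof (rule measure_eq_AE)
    have "AE a in PP.lim. a \<in> AI" using lim_AI PP.P.AE_prob_1[of AI] by (simp add: PP.P.emeasure_eq_measure)
    thus "AE a in PP.lim. (a \<in> Cy T v \<inter> AI) = (a \<in> Cy T v)" by auto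
  qed (auto simp: Cy_meas AI_sets0)
  also have "measure PP.lim (Cy T v) = measure (Pf (Dlev T)) {v}"
  proof -
    have ce: "Cy T v = {a. restrict a (Dlev T) \<in> {v}}" using in_Cy_restrict[OF v] by auto
    have "{v} \<in> sets (PB (Dlev T))"
      by (rule finite_in_PB[OF finite_Dlev]) (use v RT_sub in auto)
    from lim_emb[OF finite_Dlev this] show ?thesis unfolding measure_def ce by (simp only:)
  qed
  also have "\<dots> = measure (distr (measure_pmf (mu T)) (PB (Dlev T)) (\<lambda>w. restrict w (Dlev T))) {v}"
    by (simp add: Pf_any[OF finite_Dlev order_refl])
  also have "\<dots> = measure (mu T) ((\<lambda>w. restrict w (Dlev T)) -` {v})"
  proof -
    have "{v} \<in> sets (PB (Dlev T))"
      by (rule finite_in_PB[OF finite_Dlev]) (use v RT_sub in auto)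
    thus ?thesis by (subst measure_distr) (auto simp: restrict_space_PB)
  qed
  also have "\<dots> = (\<Sum>w\<in>RT T \<inter> (\<lambda>w. restrict w (Dlev T)) -` {v}. q T w)" by (rule measure_mu)
  also have "RT T \<inter> (\<lambda>w. restrict w (Dlev T)) -` {v} = {v}" using v restrict_RT by auto
  finally show ?thesis by simp
qed

end

context dual_seq begin

lemma Pm_basic: "prob_space Pm" "sets Pm = sets MA" "space Pm = AI"
  using Pm_prob sets_Pm sets_MA space_Pm by auto

lemma Cy_AI_sets: "Cy T v \<inter> AI \<in> sets Pm"
proof -
  have "AI \<inter> Cy T v \<in> sets MA"
    unfolding sets_restrict_space using Cy_meas by blast
  thus ?thesis using Pm_basic(2) by (simp add: Int_commute)
qed

lemma int_cyl: assumes G: "cyl T G"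
  shows "(\<integral>a. G a \<partial>Pm) = (\<Sum>v\<in>RT T. G (pk T v) * q T v)"
proof -
  interpret prob_space Pm by (rule Pm_basic(1))
  have "(\<integral>a. G a \<partial>Pm) = (\<integral>a. (\<Sum>v\<in>RT T. G (pk T v) * indicator (Cy T v \<inter> AI) a) \<partial>Pm)"
  proof (rule Bochner_Integration.integral_cong[OF refl])
    fix a assume "a \<in> space Pm"
    hence a: "a \<in> AI" using Pm_basic by simp
    show "G a = (\<Sum>v\<in>RT T. G (pk T v) * indicator (Cy T v \<inter> AI) a)"
      unfolding cyl_decomp[OF G a] using a by (simp add: indicator_def)
  qed
  also have "\<dots> = (\<Sum>v\<in>RT T. G (pk T v) * measure Pm (Cy T v \<inter> AI))"
  proof -
    have ii: "integrable Pm (indicator (Cy T v \<inter> AI) :: _ \<Rightarrow> real)" for v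
      using Bochner_Integration.integrable_indicator[OF Cy_AI_sets, of T v "1::real"] by (simp add: emeasure_eq_measure)
    show ?thesis by (subst Bochner_Integration.integral_sum) (auto simp: Cy_AI_sets ii)
  qed
  also have "\<dots> = (\<Sum>v\<in>RT T. G (pk T v) * q T v)"
    by (intro sum.cong refl) (simp add: measure_Cy)
  finally show ?thesis .
qed

lemma avg_conv:
  assumes F: "approx F" and B: "\<And>a. a \<in> AI \<Longrightarrow> \<bar>F a\<bar> \<le> B"
  shows "(\<lambda>k. avg (Ls (sq k)) F) \<longlonglongrightarrow> (\<integral>a. F a \<partial>Pm)"
proof (rule LIMSEQ_I)
  interpret prob_space Pm by (rule Pm_basic(1))
  fix e :: real assume e: "e > 0"
  then obtain T G where G: "cyl T G" "\<And>a. a \<in> AI \<Longrightarrow> \<bar>F a - G a\<bar> \<le> e / 4"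
    using F unfolding approx_def by (metis divide_pos_pos zero_less_numeral)
  have Fint: "integrable Pm F" by (rule approx_integrable[OF Pm_basic F B])
  have Gb: "\<bar>G a\<bar> \<le> B + e / 4" if "a \<in> AI" for a using G(2)[OF that] B[OF that] by linarith
  have Gapprox: "approx G" unfolding approx_def using G(1) by force
  have Gint: "integrable Pm G" by (rule approx_integrable[OF Pm_basic Gapprox Gb])
  have tG: "(\<lambda>k. avg (Ls (sq k)) G) \<longlonglongrightarrow> (\<integral>a. G a \<partial>Pm)"
    unfolding avg_cyl[OF G(1)] int_cyl[OF G(1)] by (intro tendsto_sum tendsto_mult tendsto_const q_lim)
  obtain N where N: "\<And>k. k \<ge> N \<Longrightarrow> norm (avg (Ls (sq k)) G - (\<integral>a. G a \<partial>Pm)) < e / 4"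
    using LIMSEQ_D[OF tG, of "e/4"] e by auto
  have intd: "\<bar>(\<integral>a. F a \<partial>Pm) - (\<integral>a. G a \<partial>Pm)\<bar> \<le> e / 4"
  proof -
    have "\<bar>(\<integral>a. F a \<partial>Pm) - (\<integral>a. G a \<partial>Pm)\<bar> = \<bar>\<integral>a. F a - G a \<partial>Pm\<bar>"
      by (simp add: Bochner_Integration.integral_diff[OF Fint Gint])
    also have "\<dots> \<le> (\<integral>a. \<bar>F a - G a\<bar> \<partial>Pm)" using integral_norm_bound[of Pm "\<lambda>a. F a - G a"] by simp
    also have "\<dots> \<le> (\<integral>a. e / 4 \<partial>Pm)"
      by (rule Bochner_Integration.integral_mono) (use Fint Gint G(2) Pm_basic in auto)
    also have "\<dots> = e / 4" using prob_space by simp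
    finally show ?thesis .
  qed
  have avgd: "\<bar>avg (Ls k) F - avg (Ls k) G\<bar> \<le> e / 4" for k
  proof -
    have "avg (Ls k) F - avg (Ls k) G = avg (Ls k) (\<lambda>a. F a - G a)"
      unfolding avg_def by (simp add: sum_list_subtractf diff_divide_distrib)
    hence "\<bar>avg (Ls k) F - avg (Ls k) G\<bar> \<le> avg (Ls k) (\<lambda>a. \<bar>F a - G a\<bar>)" using avg_abs by simp
    also have "\<dots> \<le> avg (Ls k) (\<lambda>a. e / 4)" by (rule avg_mono) (use G(2) Ls_AI in blast)
    also have "\<dots> = e / 4" by (rule avg_const[OF Ls_ne])
    finally show ?thesis .
  qed
  have "norm (avg (Ls (sq k)) F - (\<integral>a. F a \<partial>Pm)) < e" if "k \<ge> N" for k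
  proof -
    have "\<bar>avg (Ls (sq k)) G - (\<integral>a. G a \<partial>Pm)\<bar> < e / 4" using N[OF that] by simp
    hence "\<bar>avg (Ls (sq k)) F - (\<integral>a. F a \<partial>Pm)\<bar> < e" using avgd[of "sq k"] intd e by linarith
    thus ?thesis by simp
  qed
  thus "\<exists>N. \<forall>k\<ge>N. norm (avg (Ls (sq k)) F - (\<integral>a. F a \<partial>Pm)) < e" by blast
qed

end

context dual begin

lemma weak_le: "Vval tp \<beta> A p \<zeta> r I g gbar \<gamma> x0 s0 \<le> Dval tp \<beta> A p \<zeta> r I g gbar \<gamma> x0 s0"
  unfolding Vval_def Dval_def
proof (rule SUP_least, rule INF_greatest)
  fix P lam
  assume "P \<in> {P. lottery_feasible tp \<beta> A p \<zeta> I g gbar x0 s0 P}" "lam \<in> Lambda tp \<beta> A I s0"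
  thus "ereal (\<integral>a. Jval tp \<beta> \<zeta> r I g \<gamma> x0 s0 a \<partial>P) \<le> (SUP a\<in>AI. ereal (Lag tp \<beta> \<zeta> r I g gbar \<gamma> x0 s0 a lam))"
    using weak_duality by blast
qed

lemma strong_step:
  assumes c: "ereal c < Dval tp \<beta> A p \<zeta> r I g gbar \<gamma> x0 s0"
  shows "ereal c \<le> Vval tp \<beta> A p \<zeta> r I g gbar \<gamma> x0 s0"
proof -
  define ee where "ee N = inverse (real (Suc N))" for N
  have ee_pos: "ee N > 0" for N unfolding ee_def by simp
  have "\<forall>N. \<exists>L. L \<noteq> [] \<and> set L \<subseteq> AI \<and> c - ee N \<le> avg L Jf \<and>
     (\<forall>h as i. h \<in> Dlev N \<longrightarrow> fst h = s0 \<longrightarrow> as \<in> ALs (hlen h) \<longrightarrow> i < I \<longrightarrow> - ee N \<le> avg L (phi i h as))"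
    using stepA[OF c ee_pos] by blast
  then obtain Ls where Ls: "\<And>N. Ls N \<noteq> []" "\<And>N. set (Ls N) \<subseteq> AI" "\<And>N. c - ee N \<le> avg (Ls N) Jf"
    "\<And>N h as i. h \<in> Dlev N \<Longrightarrow> fst h = s0 \<Longrightarrow> as \<in> ALs (hlen h) \<Longrightarrow> i < I \<Longrightarrow> - ee N \<le> avg (Ls N) (phi i h as)"
    by metis
  interpret S: dual_seq tp A X \<zeta> p r I g gbar \<beta> \<gamma> x0 s0 Br Bg Ls
    by unfold_locales (use Ls in auto)
  have ee0: "(\<lambda>k. ee (S.sq k)) \<longlonglongrightarrow> 0"
  proof -
    have "ee \<longlonglongrightarrow> 0" unfolding ee_def by (rule LIMSEQ_inverse_real_of_nat)
    from LIMSEQ_subseq_LIMSEQ[OF this S.sq(1)] show ?thesis by (simp add: comp_def)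
  qed
  have Jc: "c \<le> (\<integral>a. Jf a \<partial>S.Pm)"
  proof (rule LIMSEQ_le[of "\<lambda>k. c - ee (S.sq k)" c "\<lambda>k. avg (Ls (S.sq k)) Jf"])
    show "(\<lambda>k. c - ee (S.sq k)) \<longlonglongrightarrow> c" using tendsto_diff[OF tendsto_const ee0, of c] by simp
    show "(\<lambda>k. avg (Ls (S.sq k)) Jf) \<longlonglongrightarrow> (\<integral>a. Jf a \<partial>S.Pm)"
      by (rule S.avg_conv[OF approx_J Jf_bnds(2)])
    show "\<exists>N. \<forall>n\<ge>N. c - ee (S.sq n) \<le> avg (Ls (S.sq n)) Jf" using Ls(3) by blast
  qed
  have phi0: "0 \<le> (\<integral>a. phi i h as a \<partial>S.Pm)"
    if h: "fst h = s0" and as: "as \<in> ALs (hlen h)" and i: "i < I" for h as i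
  proof (rule LIMSEQ_le[of "\<lambda>k. - ee (S.sq k)" 0 "\<lambda>k. avg (Ls (S.sq k)) (phi i h as)"])
    show "(\<lambda>k. - ee (S.sq k)) \<longlonglongrightarrow> 0" using tendsto_minus[OF ee0] by simp
    show "(\<lambda>k. avg (Ls (S.sq k)) (phi i h as)) \<longlonglongrightarrow> (\<integral>a. phi i h as a \<partial>S.Pm)"
      by (rule S.avg_conv[OF approx_phi[OF i] phi_bnd'[OF _ i]])
    have "- ee (S.sq n) \<le> avg (Ls (S.sq n)) (phi i h as)" if "n \<ge> hlen h" for n
    proof -
      have "hlen h \<le> S.sq n" using that seq_suble[OF S.sq(1), of n] by linarith
      hence "h \<in> Dlev (S.sq n)" by (simp add: Dlev_def)
      thus ?thesis using Ls(4) h as i by blast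
    qed
    thus "\<exists>N. \<forall>n\<ge>N. - ee (S.sq n) \<le> avg (Ls (S.sq n)) (phi i h as)" by blast
  qed
  have cons: "\<forall>t. \<forall>(h, as)\<in>preH A t. fst h = s0 \<longrightarrow> (\<forall>i<I.
        0 \<le> (\<integral>a. (if plan_acts a h = as then 1 else 0) * (fut tp \<beta> \<zeta> x0 a (g i) h - gbar i) \<partial>S.Pm))"
  proof (intro allI ballI)
    fix t :: nat and hh :: "'s hist \<times> (real^'n) list" assume hh: "hh \<in> preH A t"
    obtain h as where hhe: "hh = (h, as)" by (cases hh)
    have as: "as \<in> ALs (hlen h)" using hh hhe by (auto simp: preH_def ALs_def)
    have "fst h = s0 \<longrightarrow> (\<forall>i<I. 0 \<le> (\<integral>a. phi i h as a \<partial>S.Pm))" using phi0 as by blast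
    thus "case hh of (h, as) \<Rightarrow> fst h = s0 \<longrightarrow> (\<forall>i<I.
        0 \<le> (\<integral>a. (if plan_acts a h = as then 1 else 0) * (fut tp \<beta> \<zeta> x0 a (g i) h - gbar i) \<partial>S.Pm))"
      unfolding hhe phi_def by simp
  qed
  have lf: "lottery_feasible tp \<beta> A p \<zeta> I g gbar x0 s0 S.Pm"
    unfolding lottery_feasible_def using S.Pm_prob S.sets_Pm cons by blast
  have "ereal c \<le> ereal (\<integral>a. Jval tp \<beta> \<zeta> r I g \<gamma> x0 s0 a \<partial>S.Pm)"
    using Jc by (simp add: Jf_def)
  also have "\<dots> \<le> Vval tp \<beta> A p \<zeta> r I g gbar \<gamma> x0 s0"
    unfolding Vval_def by (rule SUP_upper) (use lf in simp)
  finally show ?thesis .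
qed

lemma strong_le: "Dval tp \<beta> A p \<zeta> r I g gbar \<gamma> x0 s0 \<le> Vval tp \<beta> A p \<zeta> r I g gbar \<gamma> x0 s0"
proof (rule ccontr)
  assume "\<not> ?thesis"
  hence "Vval tp \<beta> A p \<zeta> r I g gbar \<gamma> x0 s0 < Dval tp \<beta> A p \<zeta> r I g gbar \<gamma> x0 s0" by simp
  then obtain c where c: "Vval tp \<beta> A p \<zeta> r I g gbar \<gamma> x0 s0 < ereal c" "ereal c < Dval tp \<beta> A p \<zeta> r I g gbar \<gamma> x0 s0"
    using ereal_dense2 by blast
  from strong_step[OF c(2)] c(1) show False by simp
qed

lemma main: "Vval tp \<beta> A p \<zeta> r I g gbar \<gamma> x0 s0 = Dval tp \<beta> A p \<zeta> r I g gbar \<gamma> x0 s0"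
  using weak_le strong_le by (rule antisym)

end

theorem theorem4p5:
  fixes tp :: "'s::finite \<Rightarrow> 's \<Rightarrow> real"
    and A :: "(real^'n) set" and X :: "(real^'m) set"
    and \<zeta> :: "real^'m \<Rightarrow> real^'n \<Rightarrow> 's \<Rightarrow> real^'m"
    and p r :: "real^'m \<Rightarrow> real^'n \<Rightarrow> 's \<Rightarrow> real"
    and I :: nat and g :: "nat \<Rightarrow> real^'m \<Rightarrow> real^'n \<Rightarrow> 's \<Rightarrow> real"
    and gbar :: "nat \<Rightarrow> real" and \<beta> :: real
    and \<gamma> :: "nat \<Rightarrow> real" and x0 :: "real^'m" and s0 :: 's
  assumes trans_pos: "\<And>s s'. tp s s' > 0"
    and trans_sum: "\<And>s. (\<Sum>s'\<in>UNIV. tp s s') = 1"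
    and A_fin: "finite A"
    and X_count: "countable X"
    and \<zeta>_X: "\<And>x a s. x \<in> X \<Longrightarrow> a \<in> A \<Longrightarrow> \<zeta> x a s \<in> X"
    and r_bdd: "\<exists>B. \<forall>x\<in>X. \<forall>a\<in>A. \<forall>s. \<bar>r x a s\<bar> \<le> B"
    and g_bdd: "\<And>i. i < I \<Longrightarrow> \<exists>B. \<forall>x\<in>X. \<forall>a\<in>A. \<forall>s. \<bar>g i x a s\<bar> \<le> B"
    and \<beta>: "0 < \<beta>" "\<beta> < 1"
    and standing: "\<And>x s. x \<in> X \<Longrightarrow> \<exists>a. feasible_plan tp \<beta> A p \<zeta> I g gbar x s a"
    and \<gamma>_nonneg: "\<And>i. i < I \<Longrightarrow> \<gamma> i \<ge> 0"
    and x0: "x0 \<in> X"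
  shows "Vval tp \<beta> A p \<zeta> r I g gbar \<gamma> x0 s0 = Dval tp \<beta> A p \<zeta> r I g gbar \<gamma> x0 s0"
proof -
  obtain Br0 where Br0: "\<forall>x\<in>X. \<forall>a\<in>A. \<forall>s. \<bar>r x a s\<bar> \<le> Br0" using r_bdd by blast
  have "\<forall>i. \<exists>B. i < I \<longrightarrow> (\<forall>x\<in>X. \<forall>a\<in>A. \<forall>s. \<bar>g i x a s\<bar> \<le> B)" using g_bdd by blast
  then obtain Bf where Bf: "\<And>i. i < I \<Longrightarrow> \<forall>x\<in>X. \<forall>a\<in>A. \<forall>s. \<bar>g i x a s\<bar> \<le> Bf i" by metis
  define Bg where "Bg = (\<Sum>i<I. \<bar>Bf i\<bar>)"
  have gb: "\<bar>g i x a s\<bar> \<le> Bg" if "i < I" "x \<in> X" "a \<in> A" for i x a s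
  proof -
    have "\<bar>g i x a s\<bar> \<le> Bf i" using Bf[OF that(1)] that(2,3) by blast
    also have "\<dots> \<le> \<bar>Bf i\<bar>" by simp
    also have "\<dots> \<le> Bg" unfolding Bg_def by (rule member_le_sum) (use that(1) in auto)
    finally show ?thesis .
  qed
  have Bg_nn: "0 \<le> Bg" unfolding Bg_def by (simp add: sum_nonneg)
  have rb: "\<bar>r x a s\<bar> \<le> \<bar>Br0\<bar>" if "x \<in> X" "a \<in> A" for x a s
  proof -
    have "\<bar>r x a s\<bar> \<le> Br0" using Br0 that by blast
    thus ?thesis by linarith
  qed
  interpret D: dual tp A X \<zeta> p r I g gbar \<beta> \<gamma> x0 s0 "\<bar>Br0\<bar>" Bg
  proof
    show "\<And>s s'. tp s s' > 0" by (rule trans_pos)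
    show "\<And>s. (\<Sum>s'\<in>UNIV. tp s s') = 1" by (rule trans_sum)
    show "finite A" by (rule A_fin)
    show "\<And>x a s. x \<in> X \<Longrightarrow> a \<in> A \<Longrightarrow> \<zeta> x a s \<in> X" by (rule \<zeta>_X)
    show "\<And>x a s. x \<in> X \<Longrightarrow> a \<in> A \<Longrightarrow> \<bar>r x a s\<bar> \<le> \<bar>Br0\<bar>" by (rule rb)
    show "\<And>i x a s. i < I \<Longrightarrow> x \<in> X \<Longrightarrow> a \<in> A \<Longrightarrow> \<bar>g i x a s\<bar> \<le> Bg" by (rule gb)
    show "0 \<le> \<bar>Br0\<bar>" by simp
    show "0 \<le> Bg" by (rule Bg_nn)
    show "0 < \<beta>" "\<beta> < 1" by (rule \<beta>(1), rule \<beta>(2))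
    show "\<And>x s. x \<in> X \<Longrightarrow> \<exists>a. feasible_plan tp \<beta> A p \<zeta> I g gbar x s a" by (rule standing)
    show "\<And>i. i < I \<Longrightarrow> \<gamma> i \<ge> 0" by (rule \<gamma>_nonneg)
    show "x0 \<in> X" by (rule x0)
  qed
  show ?thesis by (rule D.main)
qed

end
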